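(* Let $n\ge2$, $s\ge n$ integers, $\Omega>0$, $0<\sigma<m_{\min}$, and let $\mu=\sum_{j=1}^n a_j\delta_{y_j}$ with pairwise distinct $y_j\in\big[-\frac{(n-1)\pi}{2\Omega},\frac{(n-1)\pi}{2\Omega}\big]$ and $\min_j|a_j|=m_{\min}$. For $t=1,\dots,2s+1$ let $z_t=-\Omega+\frac{t-1}{s}\Omega$ and $\mathbf Y(z_t)=\sum_{j=1}^n a_je^{iy_jz_t}+\mathbf W(z_t)$ with $|\mathbf W(z_t)|\le\sigma$. Let $\mathbf H(s)$ be the $(s+1)\times(s+1)$ Hankel matrix with entries $\mathbf H(s)_{p,q}=\mathbf Y(z_{p+q-1})$, $1\le p,q\le s+1$, and let $\hat\sigma_1\ge\dots\ge\hat\sigma_{s+1}$ be its singular values. Then $\hat\sigma_j\le(s+1)\sigma$ for $j=n+1,\dots,s+1$. Moreover, if $$\min_{p\ne j}|y_p-y_j|>\frac{\pi s}{\Omega}\Big(\frac{2n(s+1)}{\zeta(n)^2}\frac{\sigma}{m_{\min}}\Big)^{\frac{1}{2n-2}},$$ then $\hat\sigma_n>(s+1)\sigma$.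
   Context: For an integer $k\ge1$: $\zeta(k)=\big((\tfrac{k-1}{2})!\big)^2$ if $k$ is odd, $\zeta(k)=(\tfrac{k}{2})!(\tfrac{k-2}{2})!$ if $k$ is even. *)

theory Defs
  imports "Jordan_Normal_Form.Schur_Decomposition" "HOL-Computational_Algebra.Polynomial"
begin

definition zeta_fn :: "nat \<Rightarrow> real" where
  "zeta_fn k = (if odd k then (fact ((k - 1) div 2))^2
                else fact (k div 2) * fact ((k - 2) div 2))"

definition singular_values :: "complex mat \<Rightarrow> real list" where
  "singular_values A =
     rev (sorted_list_of_multiset
       (image_mset (\<lambda>e. sqrt (Re e)) (proots (char_poly (mat_adjoint A * A)))))"

definition sing_val :: "complex mat \<Rightarrow> nat \<Rightarrow> real" where
  "sing_val A k = singular_values A ! (k - 1)"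

end

theory Submission
  imports Defs
begin

lemma jordan_ineq:
  fixes x :: real assumes "0 \<le> x" "x \<le> pi/2" shows "2 * x / pi \<le> sin x"
proof (rule ccontr)
  assume "\<not> ?thesis"
  hence neg: "sin x - 2*x/pi < 0" by simp
  define g where "g = (\<lambda>t::real. sin t - 2*t/pi)"
  have d: "\<And>t. DERIV g t :> cos t - 2/pi" unfolding g_def
    by (auto intro!: derivative_eq_intros)
  have x0: "0 < x" using neg assms by (cases "x = 0") auto
  have x1: "x < pi/2" using neg assms by (cases "x = pi/2") auto
  obtain a where a: "0 < a" "a < x" "g x - g 0 = (x - 0) * (cos a - 2/pi)"
    using MVT2[OF x0, of g "\<lambda>t. cos t - 2/pi"] d by blast
  obtain b where b: "x < b" "b < pi/2" "g (pi/2) - g x = (pi/2 - x) * (cos b - 2/pi)"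
    using MVT2[OF x1, of g "\<lambda>t. cos t - 2/pi"] d by blast
  have "g x < 0" using neg unfolding g_def by simp
  moreover have "g 0 = 0" "g (pi/2) = 0" unfolding g_def by auto
  ultimately have ca: "cos a - 2/pi < 0" using a x0
    by (auto simp: mult_less_0_iff)
  have "(pi/2 - x) * (cos b - 2/pi) > 0" using b \<open>g x < 0\<close> \<open>g (pi/2) = 0\<close> by linarith
  hence cb: "cos b - 2/pi > 0" using x1 by (simp add: zero_less_mult_iff)
  note ca cb
  moreover have "cos b \<le> cos a" using a b x0
    by (intro cos_monotone_0_pi_le) auto
  ultimately show False by simp
qed

lemma chord_sq: "(cmod (cis a - cis b))^2 = 4 * (sin ((a-b)/2))^2"
proof -
  have "(cmod (cis a - cis b))^2 = (cos a - cos b)^2 + (sin a - sin b)^2"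
    by (simp add: cmod_power2)
  also have "\<dots> = 2 - 2 * cos (a - b)"
    by (simp add: cos_diff power2_diff algebra_simps)
  also have "cos (a - b) = 1 - 2 * (sin ((a-b)/2))^2"
  proof -
    have e: "2*((a-b)/2) = a - b" by simp
    have "cos (a - b) = cos (2*((a-b)/2))" by (subst e) simp
    thus ?thesis using cos_double_sin[of "(a-b)/2"] by simp
  qed
  finally show ?thesis by simp
qed

lemma chord_lower:
  assumes "\<bar>a - b\<bar> \<le> pi" shows "2 / pi * \<bar>a - b\<bar> \<le> cmod (cis a - cis b)"
proof -
  have "cmod (cis a - cis b) = 2 * \<bar>sin ((a-b)/2)\<bar>"
    using chord_sq[of a b] by (metis abs_norm_cancel norm_ge_zero power2_eq_square real_sqrt_abs2 real_sqrt_mult real_sqrt_four abs_mult abs_numeral real_sqrt_power)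
  moreover have "2 * (\<bar>a-b\<bar>/2) / pi \<le> sin (\<bar>a-b\<bar>/2)"
    using jordan_ineq[of "\<bar>a-b\<bar>/2"] assms by auto
  moreover have "\<bar>sin ((a-b)/2)\<bar> = sin (\<bar>a-b\<bar>/2)"
  proof (cases "a - b \<ge> 0")
    case True thus ?thesis using sin_ge_zero[of "(a-b)/2"] assms by auto
  next
    case False
    hence e: "\<bar>a-b\<bar>/2 = (b-a)/2" by simp
    have e2: "(b-a)/2 = -((a-b)/2)" by (simp add: field_simps)
    have "0 \<le> sin ((b-a)/2)" using sin_ge_zero[of "(b-a)/2"] assms False by auto
    moreover have "sin ((b-a)/2) = - sin ((a-b)/2)" by (subst e2, rule sin_minus)
    ultimately show ?thesis unfolding e by linarith
  qed
  ultimately show ?thesis by simp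
qed

lemma fact_balance:
  "a \<le> b \<Longrightarrow> (fact ((a+b) div 2) * fact ((a+b+1) div 2) :: real) \<le> fact a * fact b"
proof (induction "b - a" arbitrary: a b rule: less_induct)
  case less
  show ?case
  proof (cases "b \<le> a + 1")
    case True
    have "(a+b) div 2 = a" "(a+b+1) div 2 = b" using less.prems True by presburger+
    thus ?thesis by simp
  next
    case False
    hence ih: "(fact (((a+1)+(b-1)) div 2) * fact (((a+1)+(b-1)+1) div 2) :: real) \<le> fact (a+1) * fact (b-1)"
      using less by (intro less.hyps) auto
    have e: "(a+1)+(b-1) = a + b" using False by auto
    have "(fact (a+1) :: real) * fact (b-1) = (real a + 1) * fact a * fact (b - 1)"
      by (simp add: algebra_simps)
    also have "\<dots> \<le> real b * fact a * fact (b-1)"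
      using False by (intro mult_right_mono) auto
    also have "\<dots> = fact a * fact b"
    proof -
      have "b = Suc (b - 1)" using False by auto
      hence "(fact b :: real) = real b * fact (b-1)" by (metis fact_Suc of_nat_Suc)
      thus ?thesis by simp
    qed
    finally have fb: "(fact (a+1)::real) * fact (b-1) \<le> fact a * fact b" .
    from ih[unfolded e] fb show ?thesis by (rule order_trans)
  qed
qed

lemma zeta_le_fact:
  assumes "a + b + 1 = n" shows "zeta_fn n \<le> fact a * fact b"
proof -
  { fix a b :: nat assume ab: "a \<le> b" "a + b + 1 = n"
    have "zeta_fn n = fact ((a+b) div 2) * fact ((a+b+1) div 2)"
    proof (cases "odd n")
      case True
      have "(a+b) div 2 = (n - 1) div 2" "(a+b+1) div 2 = (n-1) div 2" using ab True by presburger+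
      thus ?thesis using True unfolding zeta_fn_def by (simp add: power2_eq_square)
    next
      case False
      have "(a+b) div 2 = (n - 2) div 2" "(a+b+1) div 2 = n div 2" using ab False by presburger+
      thus ?thesis using False unfolding zeta_fn_def by (simp add: mult.commute)
    qed
    hence "zeta_fn n \<le> fact a * fact b" using fact_balance[OF ab(1)] by simp }
  note * = this
  show ?thesis
  proof (cases "a \<le> b")
    case True show ?thesis using *[OF True assms] by simp
  next
    case False thus ?thesis using *[of b a] assms by (simp add: mult.commute)
  qed
qed

lemma zeta_pos: "zeta_fn n > 0" unfolding zeta_fn_def by auto

lemma rank_bound:
  fixes f :: "nat \<Rightarrow> real"
  assumes fin: "finite S" and d: "d > 0" and lo: "\<And>i. i \<in> S \<Longrightarrow> t + d \<le> f i"
    and gap: "\<And>i k. i \<in> S \<Longrightarrow> k \<in> S \<Longrightarrow> i \<noteq> k \<Longrightarrow> d \<le> \<bar>f i - f k\<bar>"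
    and iS: "i \<in> S"
  shows "(real (card {k\<in>S. f k < f i}) + 1) * d \<le> f i - t"
proof -
  have main: "\<forall>i\<in>S. card {k\<in>S. f k < f i} = m \<longrightarrow> (real m + 1) * d \<le> f i - t" for m
  proof (induction m rule: less_induct)
    case (less m)
    show ?case
    proof (intro ballI impI)
      fix i assume i: "i \<in> S" and m: "card {k\<in>S. f k < f i} = m"
      show "(real m + 1) * d \<le> f i - t"
      proof (cases "m = 0")
        case True thus ?thesis using lo[OF i] by simp
      next
        case False
        define L where "L = {k\<in>S. f k < f i}"
        have finL: "finite L" using fin unfolding L_def by auto
        have "card L \<noteq> 0" using False m unfolding L_def by auto
        hence neL: "L \<noteq> {}" by (metis card.empty)
        have "Max (f ` L) \<in> f ` L" using finL neL by auto
        then obtain k0 where k0: "k0 \<in> L" "f k0 = Max (f ` L)" by (metis imageE)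
        have kmax: "\<And>k. k \<in> L \<Longrightarrow> f k \<le> f k0" using k0 finL by auto
        have Lk0: "{k\<in>S. f k < f k0} = L - {k0}"
        proof
          show "{k\<in>S. f k < f k0} \<subseteq> L - {k0}" using k0(1) unfolding L_def by auto
          show "L - {k0} \<subseteq> {k\<in>S. f k < f k0}"
          proof
            fix k assume k: "k \<in> L - {k0}"
            hence kk: "f k \<le> f k0" "k \<in> S" "k0 \<in> S" using kmax k0 unfolding L_def by auto
            have "k \<noteq> k0" using k by auto
            have "d \<le> \<bar>f k - f k0\<bar>" using gap[OF kk(2) kk(3) \<open>k \<noteq> k0\<close>] .
            with kk show "k \<in> {k\<in>S. f k < f k0}" using d by auto
          qed
        qed
        have cL: "card (L - {k0}) = m - 1" using m k0(1) finL unfolding L_def by auto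
        have k0S: "k0 \<in> S" and fk0: "f k0 < f i" using k0(1) unfolding L_def by auto
        have ih: "(real (m-1) + 1) * d \<le> f k0 - t"
          using less.IH[of "m-1"] False k0S Lk0 cL by auto
        have "d \<le> f i - f k0" using gap[OF i k0S] fk0 by auto
        moreover have "real (m-1) + 1 = real m" using False by auto
        ultimately show ?thesis using ih by (simp add: algebra_simps)
      qed
    qed
  qed
  show ?thesis using main iS by blast
qed

lemma gap_prod:
  fixes f :: "nat \<Rightarrow> real"
  assumes fin: "finite S" and d: "d > 0" and lo: "\<And>i. i \<in> S \<Longrightarrow> t + d \<le> f i"
    and gap: "\<And>i k. i \<in> S \<Longrightarrow> k \<in> S \<Longrightarrow> i \<noteq> k \<Longrightarrow> d \<le> \<bar>f i - f k\<bar>"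
  shows "d ^ card S * fact (card S) \<le> (\<Prod>i\<in>S. f i - t)"
proof -
  define r where "r = (\<lambda>i. card {k\<in>S. f k < f i} + 1)"
  have rb: "real (r i) * d \<le> f i - t" if iS: "i \<in> S" for i
  proof -
    have "(real (card {k\<in>S. f k < f i}) + 1) * d \<le> f i - t"
      by (rule rank_bound[where S=S and f=f and t=t and d=d]) (use fin d lo gap iS in auto)
    thus ?thesis unfolding r_def by (simp add: add.commute)
  qed
  have inj: "inj_on r S"
  proof (rule inj_onI)
    fix i k assume i: "i \<in> S" and k: "k \<in> S" and e: "r i = r k"
    show "i = k"
    proof (rule ccontr)
      assume ne: "i \<noteq> k"
      hence fne: "f i \<noteq> f k" using gap[OF i k ne] d by auto
      { fix i k assume i: "i \<in> S" and k: "k \<in> S" and lt: "f i < f k"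
        have "{j\<in>S. f j < f i} \<subset> {j\<in>S. f j < f k}" using i lt by auto
        hence "card {j\<in>S. f j < f i} < card {j\<in>S. f j < f k}"
          using fin by (intro psubset_card_mono) auto
        hence "r i < r k" unfolding r_def by auto }
      note lt = this
      show False
      proof (cases "f i < f k")
        case True thus False using lt[OF i k True] e by simp
      next
        case False hence "f k < f i" using fne by simp
        thus False using lt[OF k i] e by simp
      qed
    qed
  qed
  have sub: "r ` S \<subseteq> {1..card S}"
  proof
    fix x assume "x \<in> r ` S"
    then obtain i where i: "i \<in> S" "x = r i" by auto
    have "{k\<in>S. f k < f i} \<subset> S" using i by auto
    hence "card {k\<in>S. f k < f i} < card S" using fin by (intro psubset_card_mono) auto
    thus "x \<in> {1..card S}" using i unfolding r_def by auto
  qed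
  have img: "r ` S = {1..card S}"
    using card_subset_eq[OF _ sub] card_image[OF inj] by auto
  have "d ^ card S * fact (card S) = (\<Prod>i\<in>S. d) * (\<Prod>j\<in>{1..card S}. real j)"
    by (simp add: fact_prod)
  also have "(\<Prod>j\<in>{1..card S}. real j) = (\<Prod>i\<in>S. real (r i))"
    unfolding img[symmetric] by (rule prod.reindex[OF inj, unfolded comp_def])
  also have "(\<Prod>i\<in>S. d) * (\<Prod>i\<in>S. real (r i)) = (\<Prod>i\<in>S. real (r i) * d)"
    by (simp add: prod.distrib mult.commute)
  also have "\<dots> \<le> (\<Prod>i\<in>S. f i - t)"
    by (rule prod_mono) (use rb d in auto)
  finally show ?thesis .
qed

lemma lin_mult_eq: "[:-c, 1:] * p = pCons 0 p - smult (c::complex) p"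
  by (simp add: mult_pCons_left)

lemma coeff_bound:
  fixes x :: "nat \<Rightarrow> complex"
  assumes "finite S"
  shows "degree (\<Prod>i\<in>S. [:-x i, 1:]) = card S \<and>
    (\<Sum>k\<le>card S. cmod (coeff (\<Prod>i\<in>S. [:-x i, 1:]) k)) \<le> (\<Prod>i\<in>S. 1 + cmod (x i))"
  using assms
proof (induction S rule: finite_induct)
  case empty thus ?case by simp
next
  case (insert a F)
  define P where "P = (\<Prod>i\<in>F. [:-x i, 1:])"
  define d where "d = card F"
  have degP: "degree P = d" and sP: "(\<Sum>k\<le>d. cmod (coeff P k)) \<le> (\<Prod>i\<in>F. 1 + cmod (x i))"
    using insert unfolding P_def d_def by auto
  have P': "(\<Prod>i\<in>insert a F. [:-x i, 1:]) = pCons 0 P - smult (x a) P"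
    using insert unfolding P_def by (simp add: lin_mult_eq)
  have cF: "card (insert a F) = Suc d" using insert unfolding d_def by simp
  have deg: "degree (\<Prod>i\<in>insert a F. [:-x i, 1:]) = Suc d"
  proof -
    have "P \<noteq> 0" unfolding P_def using insert.hyps(1) by (subst prod_zero_iff) auto
    hence "degree ([:-x a, 1:] * P) = degree [:-x a, 1:] + degree P"
      by (intro degree_mult_eq) auto
    thus ?thesis using insert degP unfolding P_def by simp
  qed
  have "(\<Sum>k\<le>Suc d. cmod (coeff (pCons 0 P - smult (x a) P) k))
      \<le> (\<Sum>k\<le>Suc d. cmod (coeff (pCons 0 P) k) + cmod (x a) * cmod (coeff P k))"
    by (intro sum_mono) (auto intro: order_trans[OF norm_triangle_ineq4] simp: norm_mult)
  also have "\<dots> = (\<Sum>k\<le>Suc d. cmod (coeff (pCons 0 P) k)) + cmod (x a) * (\<Sum>k\<le>Suc d. cmod (coeff P k))"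
    by (simp only: sum.distrib sum_distrib_left)
  also have "(\<Sum>k\<le>Suc d. cmod (coeff (pCons 0 P) k)) = (\<Sum>k\<le>d. cmod (coeff P k))"
    by (subst sum.atMost_Suc_shift) simp
  also have "(\<Sum>k\<le>Suc d. cmod (coeff P k)) = (\<Sum>k\<le>d. cmod (coeff P k))"
    using degP by (simp add: coeff_eq_0)
  also have "(\<Sum>k\<le>d. cmod (coeff P k)) + cmod (x a) * (\<Sum>k\<le>d. cmod (coeff P k))
      = (1 + cmod (x a)) * (\<Sum>k\<le>d. cmod (coeff P k))" by (simp add: algebra_simps)
  also have "\<dots> \<le> (1 + cmod (x a)) * (\<Prod>i\<in>F. 1 + cmod (x i))"
    by (intro mult_left_mono sP) auto
  also have "\<dots> = (\<Prod>i\<in>insert a F. 1 + cmod (x i))" using insert by simp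
  finally show ?case using deg cF P' by simp
qed

lemma prod_gap_zeta:
  fixes th :: "nat \<Rightarrow> real"
  assumes d: "\<delta> > 0" and j: "j < n"
    and gap: "\<And>i k. i < n \<Longrightarrow> k < n \<Longrightarrow> i \<noteq> k \<Longrightarrow> \<delta> \<le> \<bar>th i - th k\<bar>"
  shows "\<delta> ^ (n - 1) * zeta_fn n \<le> (\<Prod>i\<in>{..<n} - {j}. \<bar>th j - th i\<bar>)"
proof -
  define S where "S = {..<n} - {j}"
  define L where "L = {i\<in>S. th i < th j}"
  define R where "R = {i\<in>S. th j < th i}"
  have finS: "finite S" unfolding S_def by auto
  have SLR: "S = L \<union> R" "L \<inter> R = {}"
  proof -
    { fix i assume "i \<in> S"
      hence "i < n" "i \<noteq> j" unfolding S_def by auto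
      hence "th i \<noteq> th j" using gap[of i j] j d by auto }
    thus "S = L \<union> R" unfolding L_def R_def by (auto simp: neq_iff)
    show "L \<inter> R = {}" unfolding L_def R_def by auto
  qed
  have finL: "finite L" and finR: "finite R" using finS SLR by auto
  have cS: "card S = n - 1" unfolding S_def using j by simp
  have cLR: "card L + card R + 1 = n" using card_Un_disjoint[OF finL finR SLR(2)] SLR(1) cS j by simp
  have pL: "\<delta> ^ card L * fact (card L) \<le> (\<Prod>i\<in>L. (- th i) - (- th j))"
  proof (rule gap_prod[OF finL d])
    fix i assume "i \<in> L"
    hence "i < n" "i \<noteq> j" "th i < th j" unfolding L_def S_def by auto
    thus "- th j + \<delta> \<le> - th i" using gap[of i j] j by auto
  next
    fix i k assume "i \<in> L" "k \<in> L" "i \<noteq> k"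
    thus "\<delta> \<le> \<bar>- th i - - th k\<bar>" using gap[of i k] unfolding L_def S_def by auto
  qed
  have pR: "\<delta> ^ card R * fact (card R) \<le> (\<Prod>i\<in>R. th i - th j)"
  proof (rule gap_prod[OF finR d])
    fix i assume "i \<in> R"
    hence "i < n" "i \<noteq> j" "th j < th i" unfolding R_def S_def by auto
    thus "th j + \<delta> \<le> th i" using gap[of i j] j by auto
  next
    fix i k assume "i \<in> R" "k \<in> R" "i \<noteq> k"
    thus "\<delta> \<le> \<bar>th i - th k\<bar>" using gap[of i k] unfolding R_def S_def by auto
  qed
  have "(\<Prod>i\<in>S. \<bar>th j - th i\<bar>) = (\<Prod>i\<in>L. \<bar>th j - th i\<bar>) * (\<Prod>i\<in>R. \<bar>th j - th i\<bar>)"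
    unfolding SLR(1) by (rule prod.union_disjoint[OF finL finR SLR(2)])
  also have "(\<Prod>i\<in>L. \<bar>th j - th i\<bar>) = (\<Prod>i\<in>L. (- th i) - (- th j))"
    by (rule prod.cong) (auto simp: L_def)
  also have "(\<Prod>i\<in>R. \<bar>th j - th i\<bar>) = (\<Prod>i\<in>R. th i - th j)"
    by (rule prod.cong) (auto simp: R_def)
  finally have eq: "(\<Prod>i\<in>S. \<bar>th j - th i\<bar>) = (\<Prod>i\<in>L. (- th i) - (- th j)) * (\<Prod>i\<in>R. th i - th j)" .
  have "\<delta> ^ (n - 1) * zeta_fn n \<le> \<delta> ^ (n-1) * (fact (card L) * fact (card R))"
    using zeta_le_fact[OF cLR] d by (intro mult_left_mono) auto
  also have "\<dots> = (\<delta> ^ card L * fact (card L)) * (\<delta> ^ card R * fact (card R))"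
  proof -
    have "n - 1 = card L + card R" using cLR by simp
    thus ?thesis by (simp add: power_add algebra_simps)
  qed
  also have "\<dots> \<le> (\<Prod>i\<in>L. (- th i) - (- th j)) * (\<Prod>i\<in>R. th i - th j)"
  proof -
    have z: "0 \<le> \<delta> ^ card L * fact (card L)" "0 \<le> \<delta> ^ card R * fact (card R)" using d by auto
    show ?thesis by (rule mult_mono[OF pL pR _ z(2)]) (use z(1) pL in linarith)
  qed
  finally show ?thesis using eq unfolding S_def by simp
qed

lemma vand_main:
  fixes th :: "nat \<Rightarrow> real" and c :: "nat \<Rightarrow> complex"
  assumes nN: "n \<le> N" and d: "\<delta> > 0"
    and gap: "\<And>i k. i < n \<Longrightarrow> k < n \<Longrightarrow> i \<noteq> k \<Longrightarrow> \<delta> \<le> \<bar>th i - th k\<bar>"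
    and spn: "\<And>i k. i < n \<Longrightarrow> k < n \<Longrightarrow> \<bar>th i - th k\<bar> \<le> pi"
  shows "(\<Sum>j<n. (cmod (c j))\<^sup>2) \<le> real n * ((pi/\<delta>)^(n-1) / zeta_fn n)\<^sup>2
           * (\<Sum>k<N. (cmod (\<Sum>j<n. c j * cis (th j) ^ k))\<^sup>2)"
proof -
  define w where "w = (\<lambda>k. \<Sum>j<n. c j * cis (th j) ^ k)"
  define M where "M = sqrt (\<Sum>k<N. (cmod (w k))\<^sup>2)"
  define K where "K = (pi/\<delta>)^(n-1) / zeta_fn n"
  define x where "x = (\<lambda>i. cis (th i))"
  have M0: "0 \<le> M" unfolding M_def by (auto intro: sum_nonneg)
  have K0: "0 \<le> K" unfolding K_def using d zeta_pos[of n] by auto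
  have wM: "cmod (w k) \<le> M" if "k < N" for k
  proof -
    have "(cmod (w k))\<^sup>2 \<le> (\<Sum>k<N. (cmod (w k))\<^sup>2)"
      using that by (intro member_le_sum) auto
    thus ?thesis unfolding M_def by (metis norm_ge_zero real_le_rsqrt)
  qed
  have cj: "cmod (c j) \<le> K * M" if j: "j < n" for j
  proof -
    define S where "S = {..<n} - {j}"
    define P where "P = (\<Prod>i\<in>S. [:-x i, 1:])"
    have finS: "finite S" and cS: "card S = n - 1" unfolding S_def using j by auto
    from coeff_bound[OF finS, of x, folded P_def]
    have degP: "degree P = n - 1" and cb0: "(\<Sum>k\<le>n-1. cmod (coeff P k)) \<le> (\<Prod>i\<in>S. 1 + cmod (x i))"
      using cS by auto
    have "(\<Prod>i\<in>S. 1 + cmod (x i)) = 2 ^ (n-1)" using cS unfolding x_def by simp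
    with cb0 have cb: "(\<Sum>k\<le>n-1. cmod (coeff P k)) \<le> 2 ^ (n-1)" by simp
    have polyz: "poly P (x i) = 0" if "i \<in> S" for i
      unfolding P_def poly_prod using finS that by (auto intro: prod_zero)
    have ident: "(\<Sum>k\<le>n-1. coeff P k * w k) = c j * poly P (x j)"
    proof -
      have "(\<Sum>k\<le>n-1. coeff P k * w k) = (\<Sum>k\<le>n-1. \<Sum>i<n. c i * (coeff P k * x i ^ k))"
        unfolding w_def x_def by (simp add: sum_distrib_left algebra_simps)
      also have "\<dots> = (\<Sum>i<n. c i * (\<Sum>k\<le>n-1. coeff P k * x i ^ k))"
        by (subst sum.swap) (simp add: sum_distrib_left)
      also have "\<dots> = (\<Sum>i<n. c i * poly P (x i))"
        by (simp add: poly_altdef degP)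
      also have "\<dots> = c j * poly P (x j) + (\<Sum>i\<in>S. c i * poly P (x i))"
        unfolding S_def using j by (subst sum.remove[of _ j]) auto
      also have "(\<Sum>i\<in>S. c i * poly P (x i)) = 0" using polyz by simp
      finally show ?thesis by simp
    qed
    have up: "cmod (c j) * cmod (poly P (x j)) \<le> 2 ^ (n-1) * M"
    proof -
      have "cmod (c j) * cmod (poly P (x j)) = cmod (\<Sum>k\<le>n-1. coeff P k * w k)"
        using ident by (simp add: norm_mult)
      also have "\<dots> \<le> (\<Sum>k\<le>n-1. cmod (coeff P k) * cmod (w k))"
        by (rule order_trans[OF norm_sum]) (simp add: norm_mult)
      also have "\<dots> \<le> (\<Sum>k\<le>n-1. cmod (coeff P k) * M)"
        using nN j by (intro sum_mono mult_left_mono wM) auto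
      also have "\<dots> = (\<Sum>k\<le>n-1. cmod (coeff P k)) * M" by (simp add: sum_distrib_right)
      also have "\<dots> \<le> 2 ^ (n-1) * M" using cb M0 by (intro mult_right_mono) auto
      finally show ?thesis .
    qed
    have low: "(2/pi)^(n-1) * (\<delta> ^ (n - 1) * zeta_fn n) \<le> cmod (poly P (x j))"
    proof -
      have "cmod (poly P (x j)) = (\<Prod>i\<in>S. cmod (x j - x i))"
        unfolding P_def poly_prod by (simp add: prod_norm)
      also have "\<dots> \<ge> (\<Prod>i\<in>S. 2/pi * \<bar>th j - th i\<bar>)"
      proof (rule prod_mono)
        fix i assume "i \<in> S" hence "i < n" by (auto simp: S_def)
        hence "\<bar>th j - th i\<bar> \<le> pi" using spn j by auto
        from chord_lower[OF this]
        show "0 \<le> 2/pi * \<bar>th j - th i\<bar> \<and> 2/pi * \<bar>th j - th i\<bar> \<le> cmod (x j - x i)"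
          unfolding x_def by auto
      qed
      also have "(\<Prod>i\<in>S. 2/pi * \<bar>th j - th i\<bar>) = (2/pi)^(n-1) * (\<Prod>i\<in>S. \<bar>th j - th i\<bar>)"
        using cS by (simp only: prod.distrib prod_constant)
      finally have "(2/pi)^(n-1) * (\<Prod>i\<in>S. \<bar>th j - th i\<bar>) \<le> cmod (poly P (x j))" .
      moreover have "\<delta> ^ (n - 1) * zeta_fn n \<le> (\<Prod>i\<in>S. \<bar>th j - th i\<bar>)"
        unfolding S_def by (rule prod_gap_zeta[OF d j gap])
      ultimately show ?thesis
        by (meson order_trans mult_left_mono zero_le_divide_iff zero_le_power pi_ge_zero zero_le_numeral)
    qed
    define Z where "Z = (2/pi)^(n-1) * (\<delta> ^ (n - 1) * zeta_fn n)"
    have Z0: "Z > 0" unfolding Z_def using d zeta_pos[of n] by auto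
    have "cmod (c j) * Z \<le> 2 ^ (n-1) * M"
      using up low unfolding Z_def by (meson order_trans mult_left_mono norm_ge_zero)
    hence "cmod (c j) \<le> 2 ^ (n-1) * M / Z" using Z0 by (simp add: field_simps)
    also have "2 ^ (n-1) * M / Z = K * M"
      unfolding Z_def K_def using d zeta_pos[of n]
      by (simp add: power_divide field_simps)
    finally show ?thesis .
  qed
  have "(\<Sum>j<n. (cmod (c j))\<^sup>2) \<le> (\<Sum>j<n. (K * M)\<^sup>2)"
    using cj by (intro sum_mono power_mono) auto
  also have "\<dots> = real n * K\<^sup>2 * M\<^sup>2" by (simp add: power_mult_distrib)
  also have "M\<^sup>2 = (\<Sum>k<N. (cmod (w k))\<^sup>2)" unfolding M_def by (simp add: sum_nonneg)
  finally show ?thesis unfolding K_def w_def .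
qed

definition ip :: "nat \<Rightarrow> (nat \<Rightarrow> complex) \<Rightarrow> (nat \<Rightarrow> complex) \<Rightarrow> complex" where
  "ip N v w = (\<Sum>p<N. v p * cnj (w p))"

definition mv :: "complex mat \<Rightarrow> nat \<Rightarrow> (nat \<Rightarrow> complex) \<Rightarrow> nat \<Rightarrow> complex" where
  "mv B N v = (\<lambda>p. \<Sum>q<N. B $$ (p, q) * v q)"

definition herm :: "complex mat \<Rightarrow> nat \<Rightarrow> bool" where
  "herm B N = (\<forall>p<N. \<forall>q<N. B $$ (p, q) = cnj (B $$ (q, p)))"

lemma herm_ip: assumes "herm B N" shows "ip N (mv B N v) w = ip N v (mv B N w)"
proof -
  have "ip N (mv B N v) w = (\<Sum>p<N. \<Sum>q<N. B $$ (p, q) * v q * cnj (w p))"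
    unfolding ip_def mv_def by (simp add: sum_distrib_right)
  also have "\<dots> = (\<Sum>q<N. \<Sum>p<N. B $$ (p, q) * v q * cnj (w p))"
    by (rule sum.swap)
  also have "\<dots> = (\<Sum>q<N. \<Sum>p<N. v q * cnj (B $$ (q, p) * w p))"
  proof (intro sum.cong refl)
    fix p q assume "q \<in> {..<N}" "p \<in> {..<N}"
    hence "B $$ (p, q) = cnj (B $$ (q, p))" using assms unfolding herm_def by blast
    hence h: "cnj (B $$ (q, p)) = B $$ (p, q)" by simp
    show "B $$ (p, q) * v q * cnj (w p) = v q * cnj (B $$ (q, p) * w p)"
      by (simp only: complex_cnj_mult h mult_ac)
  qed
  also have "\<dots> = ip N v (mv B N w)"
    unfolding ip_def mv_def by (simp add: sum_distrib_left)
  finally show ?thesis .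
qed

lemma ip_self_real: "ip N v v = of_real (\<Sum>p<N. (cmod (v p))\<^sup>2)"
  unfolding ip_def of_real_sum complex_norm_square ..

lemma ip_conj: "cnj (ip N v w) = ip N w v"
  unfolding ip_def by (simp add: mult.commute)

lemma kernel_exists:
  fixes g :: "nat \<Rightarrow> nat \<Rightarrow> complex"
  assumes "k < N"
  shows "\<exists>v. (\<exists>p<N. v p \<noteq> 0) \<and> (\<forall>i<k. (\<Sum>p<N. g i p * v p) = 0)"
proof -
  define c where "c = (\<lambda>i. vec N (\<lambda>j. if i < k then g i j else 0) :: complex vec)"
  define M where "M = mat\<^sub>r N N (\<lambda>i. if i = N - 1 then 0\<^sub>v N else c i)"
  have M: "M \<in> carrier_mat N N" unfolding M_def by auto
  have "det M = 0" unfolding M_def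
    by (rule det_row_0) (use assms in \<open>auto simp: c_def\<close>)
  then obtain v where v: "v \<in> carrier_vec N" "v \<noteq> 0\<^sub>v N" "M *\<^sub>v v = 0\<^sub>v N"
    using det_0_iff_vec_prod_zero[OF M] by auto
  have "\<exists>p<N. v $ p \<noteq> 0"
  proof (rule ccontr)
    assume "\<not> ?thesis"
    hence "v = 0\<^sub>v N" using v(1) by (intro eq_vecI) auto
    thus False using v(2) by simp
  qed
  moreover have "(\<Sum>p<N. g i p * v $ p) = 0" if i: "i < k" for i
  proof -
    have iN: "i < N" "i \<noteq> N - 1" using i assms by auto
    have "(M *\<^sub>v v) $ i = 0" using v(3) iN by simp
    moreover have "(M *\<^sub>v v) $ i = row M i \<bullet> v" using iN M by simp
    moreover have "row M i = c i" unfolding M_def using iN by (simp add: c_def)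
    moreover have "c i \<bullet> v = (\<Sum>p<N. g i p * v $ p)"
      unfolding c_def scalar_prod_def using v(1) i by (auto intro!: sum.cong simp: lessThan_atLeast0)
    ultimately show ?thesis by simp
  qed
  ultimately show ?thesis by (intro exI[of _ "\<lambda>p. v $ p"]) auto
qed

definition tr :: "complex mat \<Rightarrow> nat \<Rightarrow> complex" where
  "tr A N = (\<Sum>i<N. A $$ (i, i))"

lemma tr_mult: assumes "X \<in> carrier_mat N N" "Y \<in> carrier_mat N N"
  shows "tr (X * Y) N = (\<Sum>i<N. \<Sum>k<N. X $$ (i,k) * Y $$ (k,i))"
  unfolding tr_def using assms
  by (intro sum.cong refl) (auto simp: scalar_prod_def lessThan_atLeast0)

lemma tr_comm: assumes "X \<in> carrier_mat N N" "Y \<in> carrier_mat N N"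
  shows "tr (X * Y) N = tr (Y * X) N"
  unfolding tr_mult[OF assms] tr_mult[OF assms(2,1)]
  by (subst sum.swap) (simp add: mult.commute)

lemma herm_all_zero_ev:
  fixes A :: "complex mat"
  assumes A: "A \<in> carrier_mat N N" and hA: "herm A N"
    and cp: "char_poly A = (\<Prod>a\<leftarrow>as. [:- a, 1:])"
    and z: "\<And>a. a \<in> set as \<Longrightarrow> a = 0"
  shows "\<And>p q. p < N \<Longrightarrow> q < N \<Longrightarrow> A $$ (p, q) = 0"
proof -
  obtain T P Q where sd: "schur_decomposition A as = (T, P, Q)" by (cases "schur_decomposition A as") auto
  from schur_decomposition[OF A cp sd]
  have sw: "similar_mat_wit A T P Q" and ut: "upper_triangular T" and dg: "diag_mat T = as" by auto
  have dA: "N = dim_row A" using A by simp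
  note W = similar_mat_witD[OF dA sw]
  have T: "T \<in> carrier_mat N N" and P: "P \<in> carrier_mat N N" and Q: "Q \<in> carrier_mat N N"
    using W by auto
  have Tii: "T $$ (i, i) = 0" if "i < N" for i
  proof -
    have "diag_mat T ! i = T $$ (i, i)" using T that unfolding diag_mat_def by simp
    moreover have "length (diag_mat T) = N" using T unfolding diag_mat_def by simp
    hence "diag_mat T ! i \<in> set as" using that unfolding dg[symmetric] by (intro nth_mem) simp
    ultimately show ?thesis using z by metis
  qed
  have trT: "tr (T * T) N = 0"
  proof -
    have "tr (T * T) N = (\<Sum>i<N. \<Sum>k<N. T $$ (i,k) * T $$ (k,i))" by (rule tr_mult[OF T T])
    also have "\<dots> = (\<Sum>i<N. \<Sum>k<N. (0::complex))"
    proof (intro sum.cong refl)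
      fix i k assume "i \<in> {..<N}" "k \<in> {..<N}"
      hence ik: "i < N" "k < N" by auto
      show "T $$ (i,k) * T $$ (k,i) = 0"
      proof (cases "k < i")
        case True thus ?thesis using ut T ik unfolding upper_triangular_def by auto
      next
        case False
        show ?thesis
        proof (cases "i < k")
          case True thus ?thesis using ut T ik unfolding upper_triangular_def by auto
        next
          case False with \<open>\<not> k < i\<close> have "i = k" by simp
          thus ?thesis using Tii ik by simp
        qed
      qed
    qed
    finally show ?thesis by simp
  qed
  have AA: "A * A = P * ((T * T) * Q)"
  proof -
    have "A * A = (P * T * Q) * (P * T * Q)" using W by simp
    also have "\<dots> = (P * T) * (Q * (P * T * Q))"
      by (rule assoc_mult_mat[OF _ Q]) (use P T Q in auto)
    also have "Q * (P * T * Q) = T * Q"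
    proof -
      have "Q * (P * T * Q) = Q * (P * (T * Q))" using assoc_mult_mat[OF P T Q] by simp
      also have "\<dots> = (Q * P) * (T * Q)" using assoc_mult_mat[OF Q P, of "T * Q" N] T Q by simp
      also have "\<dots> = T * Q" using W T Q by simp
      finally show ?thesis .
    qed
    also have "(P * T) * (T * Q) = P * (T * (T * Q))" using assoc_mult_mat[OF P T, of "T * Q" N] T Q by simp
    also have "T * (T * Q) = (T * T) * Q" using assoc_mult_mat[OF T T Q] by simp
    finally show ?thesis .
  qed
  have "tr (A * A) N = tr ((T * T) * Q * P) N"
    unfolding AA by (rule tr_comm) (use P T Q in auto)
  also have "(T * T) * Q * P = (T * T) * (Q * P)" by (rule assoc_mult_mat) (use P T Q in auto)
  also have "\<dots> = T * T" using W T by simp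
  finally have trA: "tr (A * A) N = 0" using trT by simp
  have "tr (A * A) N = (\<Sum>i<N. \<Sum>k<N. A $$ (i,k) * A $$ (k,i))" by (rule tr_mult[OF A A])
  also have "\<dots> = (\<Sum>i<N. \<Sum>k<N. of_real ((cmod (A $$ (i,k)))\<^sup>2))"
  proof (intro sum.cong refl)
    fix i k assume "i \<in> {..<N}" "k \<in> {..<N}"
    hence "A $$ (k, i) = cnj (A $$ (i, k))" using hA unfolding herm_def by blast
    thus "A $$ (i,k) * A $$ (k,i) = of_real ((cmod (A $$ (i,k)))\<^sup>2)"
      by (simp only: complex_norm_square)
  qed
  also have "\<dots> = of_real (\<Sum>i<N. \<Sum>k<N. (cmod (A $$ (i,k)))\<^sup>2)" by (simp only: of_real_sum)
  finally have "tr (A * A) N = of_real (\<Sum>i<N. \<Sum>k<N. (cmod (A $$ (i,k)))\<^sup>2)" .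
  hence s0: "(\<Sum>i<N. \<Sum>k<N. (cmod (A $$ (i,k)))\<^sup>2) = 0" using trA by (metis of_real_eq_0_iff)
  fix p q assume pq: "p < N" "q < N"
  have "(\<Sum>k<N. (cmod (A $$ (p,k)))\<^sup>2) = 0"
    using s0 pq by (subst (asm) sum_nonneg_eq_0_iff) (auto intro: sum_nonneg)
  hence "(cmod (A $$ (p,q)))\<^sup>2 = 0"
    using pq by (subst (asm) sum_nonneg_eq_0_iff) auto
  thus "A $$ (p, q) = 0" by simp
qed

lemma eigvec_fun:
  assumes A: "A \<in> carrier_mat N N" and ev: "eigenvector A w \<mu>"
  shows "(\<exists>p<N. w $ p \<noteq> 0) \<and> (\<forall>p<N. mv A N (\<lambda>p. w $ p) p = \<mu> * w $ p)"
proof -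
  have w: "w \<in> carrier_vec N" "w \<noteq> 0\<^sub>v N" "A *\<^sub>v w = \<mu> \<cdot>\<^sub>v w"
    using ev A unfolding eigenvector_def by auto
  have "\<exists>p<N. w $ p \<noteq> 0"
  proof (rule ccontr)
    assume "\<not> ?thesis"
    hence "w = 0\<^sub>v N" using w(1) by (intro eq_vecI) auto
    thus False using w(2) by simp
  qed
  moreover have "mv A N (\<lambda>p. w $ p) p = \<mu> * w $ p" if p: "p < N" for p
  proof -
    have "(A *\<^sub>v w) $ p = \<mu> * w $ p" using w p by simp
    moreover have "(A *\<^sub>v w) $ p = (\<Sum>q<N. A $$ (p, q) * w $ q)"
      using A w(1) p by (auto simp: scalar_prod_def lessThan_atLeast0 intro!: sum.cong)
    ultimately show ?thesis unfolding mv_def by simp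
  qed
  ultimately show ?thesis by blast
qed

lemma normalize_vec:
  assumes nz: "\<exists>p<N. f p \<noteq> 0" and orth: "\<forall>i<k. ip N f (u i) = 0"
    and ev: "\<forall>p<N. mv B N f p = of_real \<mu> * f p"
  shows "\<exists>v \<mu>. (\<forall>i<k. ip N v (u i) = 0) \<and> ip N v v = 1 \<and> (\<forall>p<N. mv B N v p = of_real \<mu> * v p)"
proof -
  define S where "S = (\<Sum>p<N. (cmod (f p))\<^sup>2)"
  obtain p0 where p0: "p0 < N" "f p0 \<noteq> 0" using nz by auto
  have "(cmod (f p0))\<^sup>2 \<le> S" unfolding S_def using p0 by (intro member_le_sum) auto
  moreover have "(cmod (f p0))\<^sup>2 > 0" using p0 by simp
  ultimately have S0: "S > 0" by linarith
  define r where "r = sqrt S"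
  have r0: "r > 0" unfolding r_def using S0 by simp
  define v where "v = (\<lambda>p. f p / of_real r)"
  have "ip N v (u i) = ip N f (u i) / of_real r" for i
    unfolding ip_def v_def by (simp add: sum_divide_distrib)
  hence o: "\<forall>i<k. ip N v (u i) = 0" using orth by simp
  have "ip N v v = ip N f f / (of_real r * of_real r)"
    unfolding ip_def v_def by (simp add: sum_divide_distrib)
  also have "ip N f f = of_real S" unfolding S_def by (rule ip_self_real)
  also have "of_real r * of_real r = (of_real S :: complex)"
    unfolding r_def using S0 by (simp flip: of_real_mult)
  finally have n: "ip N v v = 1" using S0 by simp
  have "mv B N v p = mv B N f p / of_real r" for p
    unfolding mv_def v_def by (simp add: sum_divide_distrib)
  hence "\<forall>p<N. mv B N v p = of_real \<mu> * v p" using ev unfolding v_def by simp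
  with o n show ?thesis by blast
qed

lemma ip_scale_left: "ip N (\<lambda>p. a * f p) w = a * ip N f w"
  unfolding ip_def by (simp add: sum_distrib_left mult.assoc)

lemma ip_scale_right: "ip N f (\<lambda>p. a * w p) = cnj a * ip N f w"
  unfolding ip_def by (simp add: sum_distrib_left mult_ac)

lemma ip_cong_left: "(\<And>p. p < N \<Longrightarrow> f p = g p) \<Longrightarrow> ip N f w = ip N g w"
  unfolding ip_def by (intro sum.cong) auto

lemma ip_cong_right: "(\<And>p. p < N \<Longrightarrow> f p = g p) \<Longrightarrow> ip N w f = ip N w g"
  unfolding ip_def by (intro sum.cong) auto

lemma deflate_step:
  fixes B :: "complex mat" and u :: "nat \<Rightarrow> nat \<Rightarrow> complex" and d :: "nat \<Rightarrow> real"
  assumes B: "B \<in> carrier_mat N N" and hB: "herm B N" and kN: "k < N"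
    and ON: "\<And>i l. i < k \<Longrightarrow> l < k \<Longrightarrow> ip N (u i) (u l) = (if i = l then 1 else 0)"
    and EV: "\<And>i p. i < k \<Longrightarrow> p < N \<Longrightarrow> mv B N (u i) p = of_real (d i) * u i p"
  shows "\<exists>v \<mu>. (\<forall>i<k. ip N v (u i) = 0) \<and> ip N v v = 1 \<and> (\<forall>p<N. mv B N v p = of_real \<mu> * v p)"
proof -
  define A where "A = mat N N (\<lambda>(p,q). B $$ (p,q) - (\<Sum>l<k. of_real (d l) * u l p * cnj (u l q)))"
  have A: "A \<in> carrier_mat N N" unfolding A_def by simp
  have Aent: "A $$ (p,q) = B $$ (p,q) - (\<Sum>l<k. of_real (d l) * u l p * cnj (u l q))"
    if "p < N" "q < N" for p q using that unfolding A_def by simp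
  have hA: "herm A N" unfolding herm_def
  proof (intro allI impI)
    fix p q assume pq: "p < N" "q < N"
    have "B $$ (q, p) = cnj (B $$ (p, q))" using hB pq unfolding herm_def by blast
    hence h: "cnj (B $$ (q, p)) = B $$ (p, q)" by simp
    show "A $$ (p, q) = cnj (A $$ (q, p))"
      using pq by (simp add: Aent h mult_ac)
  qed
  have mvA: "mv A N v p = mv B N v p - (\<Sum>l<k. of_real (d l) * u l p * ip N v (u l))"
    if p: "p < N" for v p
  proof -
    have "mv A N v p = (\<Sum>q<N. B $$ (p,q) * v q - (\<Sum>l<k. of_real (d l) * u l p * (v q * cnj (u l q))))"
      unfolding mv_def using p by (intro sum.cong refl) (simp add: Aent right_diff_distrib left_diff_distrib sum_distrib_left sum_distrib_right mult_ac)
    also have "\<dots> = mv B N v p - (\<Sum>l<k. of_real (d l) * u l p * ip N v (u l))"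
      unfolding mv_def ip_def sum_subtractf
      by (subst sum.swap) (simp add: sum_distrib_left)
    finally show ?thesis .
  qed
  have Au0: "mv A N (u i) p = 0" if "i < k" "p < N" for i p
  proof -
    have "(\<Sum>l<k. of_real (d l) * u l p * ip N (u i) (u l)) = (\<Sum>l<k. if l = i then of_real (d i) * u i p else 0)"
      using that by (intro sum.cong refl) (auto simp: ON)
    also have "\<dots> = of_real (d i) * u i p" using that by simp
    finally show ?thesis using mvA[OF that(2)] EV[OF that] by simp
  qed
  have AB: "mv A N v p = mv B N v p" if "\<forall>i<k. ip N v (u i) = 0" "p < N" for v p
    using mvA[OF that(2), of v] that(1) by simp
  obtain as where cp: "char_poly A = (\<Prod>a\<leftarrow>as. [:- a, 1:])" and las: "length as = N"
    using char_poly_factorized[OF A] by auto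
  show ?thesis
  proof (cases "\<exists>a\<in>set as. a \<noteq> 0")
    case True
    then obtain a where a: "a \<in> set as" "a \<noteq> 0" by auto
    have "poly (char_poly A) a = 0" unfolding cp using a(1)
      by (auto simp: poly_prod_list prod_list_zero_iff)
    hence "eigenvalue A a" using eigenvalue_root_char_poly[OF A] by simp
    then obtain w where "eigenvector A w a" unfolding eigenvalue_def by auto
    from eigvec_fun[OF A this]
    obtain f where nz: "\<exists>p<N. f p \<noteq> 0" and ef: "\<forall>p<N. mv A N f p = a * f p" by blast
    have orth: "\<forall>i<k. ip N f (u i) = 0"
    proof (intro allI impI)
      fix i assume i: "i < k"
      have "a * ip N f (u i) = ip N (mv A N f) (u i)"
        by (subst ip_scale_left[symmetric], rule ip_cong_left) (use ef in simp)
      also have "\<dots> = ip N f (mv A N (u i))" by (rule herm_ip[OF hA])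
      also have "\<dots> = ip N f (\<lambda>p. 0 * u i p)" by (rule ip_cong_right) (use Au0 i in simp)
      also have "\<dots> = 0" by (simp add: ip_def)
      finally show "ip N f (u i) = 0" using a(2) by simp
    qed
    have real: "a = of_real (Re a)"
    proof -
      have "a * ip N f f = ip N (mv A N f) f"
        by (subst ip_scale_left[symmetric], rule ip_cong_left) (use ef in simp)
      also have "\<dots> = ip N f (mv A N f)" by (rule herm_ip[OF hA])
      also have "\<dots> = ip N f (\<lambda>p. a * f p)" by (rule ip_cong_right) (use ef in simp)
      also have "\<dots> = cnj a * ip N f f" by (rule ip_scale_right)
      finally have e: "a * ip N f f = cnj a * ip N f f" .
      obtain p0 where p0: "p0 < N" "f p0 \<noteq> 0" using nz by auto
      have "(cmod (f p0))\<^sup>2 \<le> (\<Sum>p<N. (cmod (f p))\<^sup>2)" using p0 by (intro member_le_sum) auto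
      moreover have "(cmod (f p0))\<^sup>2 > 0" using p0 by simp
      ultimately have "(\<Sum>p<N. (cmod (f p))\<^sup>2) \<noteq> 0" by linarith
      hence "ip N f f \<noteq> 0" unfolding ip_self_real by (metis of_real_eq_0_iff)
      with e have "a = cnj a" by simp
      thus ?thesis by (metis Reals_cnj_iff complex_is_Real_iff of_real_Re)
    qed
    have "\<forall>p<N. mv B N f p = of_real (Re a) * f p"
      using AB[OF orth] ef real by auto
    from normalize_vec[OF nz orth this] show ?thesis .
  next
    case False
    hence z: "\<And>a. a \<in> set as \<Longrightarrow> a = 0" by auto
    have A0: "A $$ (p, q) = 0" if "p < N" "q < N" for p q
      using herm_all_zero_ev[OF A hA cp z that] .
    obtain f where nz: "\<exists>p<N. f p \<noteq> 0" and fo: "\<forall>i<k. (\<Sum>p<N. cnj (u i p) * f p) = 0"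
      using kernel_exists[OF kN, of "\<lambda>i p. cnj (u i p)"] by auto
    have orth: "\<forall>i<k. ip N f (u i) = 0" using fo unfolding ip_def by (simp add: mult.commute)
    have "mv B N f p = of_real 0 * f p" if p: "p < N" for p
    proof -
      have "mv A N f p = 0" unfolding mv_def using A0 p by simp
      thus ?thesis using AB[OF orth p] by simp
    qed
    with normalize_vec[OF nz orth] show ?thesis by blast
  qed
qed

lemma spectral_induct:
  fixes B :: "complex mat"
  assumes B: "B \<in> carrier_mat N N" and hB: "herm B N"
  shows "k \<le> N \<Longrightarrow> \<exists>u d. (\<forall>i<k. \<forall>l<k. ip N (u i) (u l) = (if i = l then 1 else 0)) \<and>
           (\<forall>i<k. \<forall>p<N. mv B N (u i) p = of_real (d i) * u i p)"
proof (induction k)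
  case 0 show ?case by simp
next
  case (Suc k)
  then obtain u d where ON: "\<forall>i<k. \<forall>l<k. ip N (u i) (u l) = (if i = l then 1 else 0)"
    and EV: "\<forall>i<k. \<forall>p<N. mv B N (u i) p = of_real (d i) * u i p" by auto
  have kN: "k < N" using Suc by simp
  obtain v \<mu> where vo: "\<forall>i<k. ip N v (u i) = 0" and vn: "ip N v v = 1"
    and ve: "\<forall>p<N. mv B N v p = of_real \<mu> * v p"
    using deflate_step[OF B hB kN, of u d] ON EV by blast
  define u' where "u' = u(k := v)"
  define d' where "d' = d(k := \<mu>)"
  have "\<forall>i<Suc k. \<forall>l<Suc k. ip N (u' i) (u' l) = (if i = l then 1 else 0)"
  proof (intro allI impI)
    fix i l assume i: "i < Suc k" and l: "l < Suc k"
    show "ip N (u' i) (u' l) = (if i = l then 1 else 0)"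
    proof (cases "i = k")
      case True
      show ?thesis
      proof (cases "l = k")
        case True thus ?thesis using \<open>i = k\<close> vn unfolding u'_def by simp
      next
        case False thus ?thesis using \<open>i = k\<close> vo l unfolding u'_def by simp
      qed
    next
      case False
      show ?thesis
      proof (cases "l = k")
        case True
        have "ip N (u i) v = cnj (ip N v (u i))" by (simp add: ip_conj)
        thus ?thesis using True False vo i unfolding u'_def by simp
      next
        case False2: False thus ?thesis using False ON i l unfolding u'_def by simp
      qed
    qed
  qed
  moreover have "\<forall>i<Suc k. \<forall>p<N. mv B N (u' i) p = of_real (d' i) * u' i p"
    using EV ve unfolding u'_def d'_def by (auto simp: less_Suc_eq)
  ultimately show ?case by blast
qed

lemma proots_linear_list: "proots (\<Prod>a\<leftarrow>xs. [:- a, 1:]) = mset (xs :: complex list)"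
proof (induction xs)
  case Nil thus ?case by simp
next
  case (Cons a xs)
  have nz: "(\<Prod>a\<leftarrow>xs. [:- a, 1:]) \<noteq> (0 :: complex poly)" by (auto simp: prod_list_zero_iff)
  have e: "(\<Prod>a\<leftarrow>a # xs. [:- a, 1:]) = [:- a, 1:] * (\<Prod>a\<leftarrow>xs. [:- a, 1:])" by simp
  have "proots ([:- a, 1:] * (\<Prod>a\<leftarrow>xs. [:- a, 1:])) = proots [:- a, 1:] + proots (\<Prod>a\<leftarrow>xs. [:- a, 1:])"
    by (rule proots_mult) (use nz in auto)
  also have "proots [:- a, 1:] = {#a#}" using proots_linear_factor[of "-a"] by simp
  finally show ?case unfolding e using Cons by simp
qed

lemma spectral:
  fixes B :: "complex mat"
  assumes B: "B \<in> carrier_mat N N" and hB: "herm B N"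
  shows "\<exists>u d. (\<forall>i<N. \<forall>l<N. ip N (u i) (u l) = (if i = l then 1 else 0)) \<and>
           (\<forall>i<N. \<forall>p<N. mv B N (u i) p = of_real (d i) * u i p) \<and>
           proots (char_poly B) = mset (map (\<lambda>i. complex_of_real (d i)) [0..<N])"
proof -
  obtain u d where ON: "\<forall>i<N. \<forall>l<N. ip N (u i) (u l) = (if i = l then 1 else 0)"
    and EV: "\<forall>i<N. \<forall>p<N. mv B N (u i) p = of_real (d i) * u i p"
    using spectral_induct[OF B hB, of N] by auto
  define U where "U = mat N N (\<lambda>(p,i). u i p)"
  define Uh where "Uh = mat N N (\<lambda>(i,p). cnj (u i p))"
  define D where "D = mat N N (\<lambda>(i,j). if i = j then complex_of_real (d i) else 0)"
  have U: "U \<in> carrier_mat N N" and Uh: "Uh \<in> carrier_mat N N" and D: "D \<in> carrier_mat N N"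
    unfolding U_def Uh_def D_def by auto
  have UhU: "Uh * U = 1\<^sub>m N"
  proof (rule eq_matI)
    fix i l assume il: "i < dim_row (1\<^sub>m N :: complex mat)" "l < dim_col (1\<^sub>m N :: complex mat)"
    hence "(Uh * U) $$ (i, l) = (\<Sum>p<N. cnj (u i p) * u l p)"
      unfolding Uh_def U_def by (auto simp: scalar_prod_def lessThan_atLeast0 intro!: sum.cong)
    also have "\<dots> = ip N (u l) (u i)" unfolding ip_def by (simp add: mult.commute)
    also have "\<dots> = (1\<^sub>m N :: complex mat) $$ (i, l)" using ON il by auto
    finally show "(Uh * U) $$ (i, l) = (1\<^sub>m N :: complex mat) $$ (i, l)" .
  qed (use Uh U in auto)
  have UUh: "U * Uh = 1\<^sub>m N" by (rule mat_mult_left_right_inverse[OF Uh U UhU])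
  have BU: "B * U = U * D"
  proof (rule eq_matI)
    fix p i assume pi: "p < dim_row (U * D)" "i < dim_col (U * D)"
    hence pi': "p < N" "i < N" using U D by auto
    have "(B * U) $$ (p, i) = (\<Sum>q<N. B $$ (p, q) * u i q)"
      using B pi' unfolding U_def by (auto simp: scalar_prod_def lessThan_atLeast0 intro!: sum.cong)
    also have "\<dots> = of_real (d i) * u i p" using EV pi' unfolding mv_def by simp
    also have "\<dots> = (U * D) $$ (p, i)"
    proof -
      have "(U * D) $$ (p, i) = (\<Sum>j<N. u j p * (if j = i then complex_of_real (d i) else 0))"
        using pi' unfolding U_def D_def by (auto simp: scalar_prod_def lessThan_atLeast0 intro!: sum.cong)
      also have "\<dots> = u i p * of_real (d i)" using pi' by (simp add: if_distrib cong: if_cong)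
      finally show ?thesis by simp
    qed
    finally show "(B * U) $$ (p, i) = (U * D) $$ (p, i)" .
  qed (use B U D in auto)
  have BUDU: "B = U * D * Uh"
  proof -
    have "B = B * (U * Uh)" using B UUh by simp
    also have "\<dots> = (B * U) * Uh" using assoc_mult_mat[OF B U Uh] by simp
    finally show ?thesis using BU by simp
  qed
  have sw: "similar_mat_wit B D U Uh"
    unfolding similar_mat_wit_def Let_def using B U Uh D UUh UhU BUDU by auto
  have "char_poly B = char_poly D"
    by (rule char_poly_similar) (use sw in \<open>auto simp: similar_mat_def\<close>)
  also have "\<dots> = (\<Prod>a\<leftarrow>diag_mat D. [:- a, 1:])"
    by (rule char_poly_upper_triangular[OF D]) (auto simp: upper_triangular_def D_def)
  also have "diag_mat D = map (\<lambda>i. complex_of_real (d i)) [0..<N]"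
    unfolding diag_mat_def D_def by auto
  finally have "proots (char_poly B) = mset (map (\<lambda>i. complex_of_real (d i)) [0..<N])"
    by (simp only: proots_linear_list)
  with ON EV show ?thesis by blast
qed

lemma adj_entries:
  assumes H: "H \<in> carrier_mat N N" and pq: "p < N" "q < N"
  shows "(mat_adjoint H * H) $$ (p, q) = (\<Sum>r<N. cnj (H $$ (r, p)) * H $$ (r, q))"
  using H pq unfolding mat_adjoint_def mat_of_rows_def
  by (auto simp: scalar_prod_def lessThan_atLeast0 intro!: sum.cong)

lemma adj_carrier: "H \<in> carrier_mat N N \<Longrightarrow> mat_adjoint H * H \<in> carrier_mat N N"
  unfolding mat_adjoint_def mat_of_rows_def by auto

lemma herm_adj: assumes H: "H \<in> carrier_mat N N" shows "herm (mat_adjoint H * H) N"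
  unfolding herm_def
proof (intro allI impI)
  fix p q assume "p < N" "q < N"
  thus "(mat_adjoint H * H) $$ (p, q) = cnj ((mat_adjoint H * H) $$ (q, p))"
    using adj_entries[OF H] by (simp add: mult.commute)
qed

lemma HH_ip:
  assumes H: "H \<in> carrier_mat N N"
  shows "ip N (mv H N v) (mv H N w) = ip N (mv (mat_adjoint H * H) N v) w"
proof -
  have "ip N (mv H N v) (mv H N w) = (\<Sum>p<N. \<Sum>r<N. \<Sum>q<N. H $$ (p, q) * v q * cnj (H $$ (p, r) * w r))"
    unfolding ip_def mv_def by (simp add: sum_distrib_left sum_distrib_right cnj_sum)
  also have "\<dots> = (\<Sum>r<N. \<Sum>p<N. \<Sum>q<N. H $$ (p, q) * v q * cnj (H $$ (p, r) * w r))"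
    by (rule sum.swap)
  also have "\<dots> = (\<Sum>r<N. \<Sum>q<N. \<Sum>p<N. H $$ (p, q) * v q * cnj (H $$ (p, r) * w r))"
    by (rule sum.cong[OF refl], rule sum.swap)
  also have "\<dots> = ip N (mv (mat_adjoint H * H) N v) w"
    unfolding ip_def mv_def using adj_entries[OF H]
    by (simp add: sum_distrib_left sum_distrib_right mult_ac)
  finally show ?thesis .
qed

lemma sv_facts:
  assumes H: "H \<in> carrier_mat N N"
  shows "\<exists>u d. (\<forall>i<N. \<forall>l<N. ip N (u i) (u l) = (if i = l then 1 else 0)) \<and>
           (\<forall>i<N. \<forall>p<N. mv (mat_adjoint H * H) N (u i) p = of_real (d i) * u i p) \<and>
           (\<forall>i<N. 0 \<le> d i) \<and>
           singular_values H = rev (sort (map (\<lambda>i. sqrt (d i)) [0..<N]))"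
proof -
  let ?B = "mat_adjoint H * H"
  obtain u d where ON: "\<forall>i<N. \<forall>l<N. ip N (u i) (u l) = (if i = l then 1 else 0)"
    and EV: "\<forall>i<N. \<forall>p<N. mv ?B N (u i) p = of_real (d i) * u i p"
    and pr: "proots (char_poly ?B) = mset (map (\<lambda>i. complex_of_real (d i)) [0..<N])"
    using spectral[OF adj_carrier[OF H] herm_adj[OF H]] by blast
  have dnn: "0 \<le> d i" if i: "i < N" for i
  proof -
    have "ip N (mv ?B N (u i)) (u i) = ip N (\<lambda>p. of_real (d i) * u i p) (u i)"
      by (rule ip_cong_left) (use EV i in auto)
    also have "\<dots> = of_real (d i)" using ON i by (simp add: ip_scale_left)
    finally have "of_real (d i) = ip N (mv H N (u i)) (mv H N (u i))" using HH_ip[OF H] by simp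
    also have "\<dots> = of_real (\<Sum>p<N. (cmod (mv H N (u i) p))\<^sup>2)" by (rule ip_self_real)
    finally have "d i = (\<Sum>p<N. (cmod (mv H N (u i) p))\<^sup>2)" by (simp only: of_real_eq_iff)
    thus ?thesis by (simp add: sum_nonneg)
  qed
  have "singular_values H = rev (sort (map (\<lambda>i. sqrt (d i)) [0..<N]))"
    unfolding singular_values_def pr by (simp flip: mset_map add: comp_def)
  with ON EV dnn show ?thesis by blast
qed

lemma desc_nth_gt:
  fixes ys :: "real list"
  assumes j: "j < length ys"
  shows "(c < rev (sort ys) ! j) \<longleftrightarrow> (j < length (filter (\<lambda>x. c < x) ys))"
proof -
  define xs where "xs = rev (sort ys)"
  have len: "length xs = length ys" unfolding xs_def by simp
  have srt: "sorted_wrt (\<lambda>a b. b \<le> a) xs" unfolding xs_def sorted_wrt_rev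
    using sorted_sort[of ys] by simp
  hence mono: "xs ! b \<le> xs ! a" if "a < b" "b < length xs" for a b
    using that unfolding sorted_wrt_iff_nth_less by blast
  have "length (filter (\<lambda>x. c < x) ys) = length (filter (\<lambda>x. c < x) xs)"
  proof -
    have "mset xs = mset ys" unfolding xs_def by simp
    hence "mset (filter (\<lambda>x. c < x) xs) = mset (filter (\<lambda>x. c < x) ys)" by simp
    thus ?thesis by (metis size_mset)
  qed
  also have "\<dots> = card {i. i < length xs \<and> c < xs ! i}" by (rule length_filter_conv_card)
  finally have cnt: "length (filter (\<lambda>x. c < x) ys) = card {i. i < length xs \<and> c < xs ! i}" .
  show ?thesis
  proof
    assume a: "c < rev (sort ys) ! j"
    have "{..j} \<subseteq> {i. i < length xs \<and> c < xs ! i}"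
    proof
      fix i assume "i \<in> {..j}"
      hence "i \<le> j" by simp
      moreover have "xs ! j \<le> xs ! i" if "i < j" using mono[OF that] j len by simp
      ultimately show "i \<in> {i. i < length xs \<and> c < xs ! i}"
        using a j len unfolding xs_def[symmetric] by (cases "i = j") force+
    qed
    hence "card {..j} \<le> card {i. i < length xs \<and> c < xs ! i}" by (intro card_mono) auto
    thus "j < length (filter (\<lambda>x. c < x) ys)" using cnt by simp
  next
    assume b: "j < length (filter (\<lambda>x. c < x) ys)"
    show "c < rev (sort ys) ! j"
    proof (rule ccontr)
      assume "\<not> ?thesis"
      hence xj: "xs ! j \<le> c" unfolding xs_def by simp
      have "{i. i < length xs \<and> c < xs ! i} \<subseteq> {..<j}"
      proof
        fix i assume i: "i \<in> {i. i < length xs \<and> c < xs ! i}"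
        show "i \<in> {..<j}"
        proof (rule ccontr)
          assume "i \<notin> {..<j}"
          hence "j \<le> i" by simp
          hence "xs ! i \<le> xs ! j" using i mono[of j i] by (cases "j = i") auto
          thus False using i xj by simp
        qed
      qed
      hence "card {i. i < length xs \<and> c < xs ! i} \<le> card {..<j}" by (intro card_mono) auto
      thus False using b cnt by simp
    qed
  qed
qed

lemma ip_bilin:
  "ip N (\<lambda>q. \<Sum>r<K. \<beta> r * w r q) (\<lambda>q. \<Sum>r'<K'. \<gamma> r' * v r' q)
     = (\<Sum>r<K. \<Sum>r'<K'. \<beta> r * cnj (\<gamma> r') * ip N (w r) (v r'))"
proof -
  have "ip N (\<lambda>q. \<Sum>r<K. \<beta> r * w r q) (\<lambda>q. \<Sum>r'<K'. \<gamma> r' * v r' q)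
      = (\<Sum>q<N. \<Sum>r'<K'. \<Sum>r<K. \<beta> r * cnj (\<gamma> r') * (w r q * cnj (v r' q)))"
    unfolding ip_def by (simp add: cnj_sum sum_distrib_left sum_distrib_right mult_ac)
  also have "\<dots> = (\<Sum>r'<K'. \<Sum>q<N. \<Sum>r<K. \<beta> r * cnj (\<gamma> r') * (w r q * cnj (v r' q)))"
    by (rule sum.swap)
  also have "\<dots> = (\<Sum>r'<K'. \<Sum>r<K. \<Sum>q<N. \<beta> r * cnj (\<gamma> r') * (w r q * cnj (v r' q)))"
    by (rule sum.cong[OF refl], rule sum.swap)
  also have "\<dots> = (\<Sum>r<K. \<Sum>r'<K'. \<Sum>q<N. \<beta> r * cnj (\<gamma> r') * (w r q * cnj (v r' q)))"
    by (rule sum.swap)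
  also have "\<dots> = (\<Sum>r<K. \<Sum>r'<K'. \<beta> r * cnj (\<gamma> r') * ip N (w r) (v r'))"
    unfolding ip_def by (simp add: sum_distrib_left)
  finally show ?thesis .
qed

lemma mv_lin: "mv B N (\<lambda>q. \<Sum>r<K. \<beta> r * w r q) p = (\<Sum>r<K. \<beta> r * mv B N (w r) p)"
  unfolding mv_def by (simp add: sum_distrib_left mult_ac) (rule sum.swap)

lemma family_sums:
  fixes K :: nat and w :: "nat \<Rightarrow> nat \<Rightarrow> complex" and \<beta> :: "nat \<Rightarrow> complex" and lam :: "nat \<Rightarrow> real"
  assumes ON: "\<And>r r'. r < K \<Longrightarrow> r' < K \<Longrightarrow> ip N (w r) (w r') = (if r = r' then 1 else 0)"
    and EV: "\<And>r p. r < K \<Longrightarrow> p < N \<Longrightarrow> mv B N (w r) p = of_real (lam r) * w r p"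
    and x: "x = (\<lambda>q. \<Sum>r<K. \<beta> r * w r q)"
  shows "ip N x x = of_real (\<Sum>r<K. (cmod (\<beta> r))\<^sup>2)"
    and "ip N (mv B N x) x = of_real (\<Sum>r<K. lam r * (cmod (\<beta> r))\<^sup>2)"
proof -
  have diag: "(\<Sum>r<K. \<Sum>r'<K. f r * cnj (\<beta> r') * ip N (w r) (w r')) = (\<Sum>r<K. f r * cnj (\<beta> r))"
    for f :: "nat \<Rightarrow> complex"
  proof -
    have "(\<Sum>r<K. \<Sum>r'<K. f r * cnj (\<beta> r') * ip N (w r) (w r'))
        = (\<Sum>r<K. \<Sum>r'<K. if r' = r then f r * cnj (\<beta> r) else 0)"
      using ON by (intro sum.cong refl) auto
    also have "\<dots> = (\<Sum>r<K. f r * cnj (\<beta> r))" by simp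
    finally show ?thesis .
  qed
  have "ip N x x = (\<Sum>r<K. \<beta> r * cnj (\<beta> r))" unfolding x ip_bilin by (rule diag)
  also have "\<dots> = of_real (\<Sum>r<K. (cmod (\<beta> r))\<^sup>2)"
    unfolding of_real_sum complex_norm_square ..
  finally show "ip N x x = of_real (\<Sum>r<K. (cmod (\<beta> r))\<^sup>2)" .
  have "ip N (mv B N x) x = ip N (\<lambda>p. \<Sum>r<K. (\<beta> r * of_real (lam r)) * w r p) x"
    by (rule ip_cong_left) (simp add: x mv_lin EV mult_ac)
  also have "\<dots> = (\<Sum>r<K. (\<beta> r * of_real (lam r)) * cnj (\<beta> r))" unfolding x ip_bilin by (rule diag)
  also have "\<dots> = of_real (\<Sum>r<K. lam r * (cmod (\<beta> r))\<^sup>2)"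
    unfolding of_real_sum
  proof (intro sum.cong refl)
    fix r show "\<beta> r * of_real (lam r) * cnj (\<beta> r) = of_real (lam r * (cmod (\<beta> r))\<^sup>2)"
      unfolding of_real_mult complex_norm_square by (simp only: mult_ac)
  qed
  finally show "ip N (mv B N x) x = of_real (\<Sum>r<K. lam r * (cmod (\<beta> r))\<^sup>2)" .
qed

lemma pick_family:
  assumes "finite T" "K \<le> card T"
  shows "\<exists>e. (\<forall>r<K. e r \<in> T) \<and> inj_on e {..<K}"
proof -
  obtain S where S: "S \<subseteq> T" "card S = K" using obtain_subset_with_card_n[OF assms(2)] by auto
  have "finite S" using S assms(1) finite_subset by auto
  then obtain h where h: "bij_betw h {0..<card S} S" using ex_bij_betw_nat_finite by blast
  hence "inj_on h {..<K}" "\<forall>r<K. h r \<in> T" using S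
    by (auto simp: bij_betw_def lessThan_atLeast0)
  thus ?thesis by blast
qed

lemma family_ON:
  assumes ON: "\<forall>i<N. \<forall>l<N. ip N (u i) (u l) = (if i = l then 1 else 0)"
    and e: "\<forall>r<K. e r \<in> {..<N}" "inj_on e {..<K}"
  shows "\<And>r r'. r < K \<Longrightarrow> r' < K \<Longrightarrow> ip N (u (e r)) (u (e r')) = (if r = r' then 1 else 0)"
proof -
  fix r r' assume r: "r < K" "r' < K"
  have "(e r = e r') = (r = r')" using e(2) r by (auto dest: inj_onD)
  thus "ip N (u (e r)) (u (e r')) = (if r = r' then 1 else 0)" using ON e(1) r by auto
qed

lemma part1:
  fixes H :: "complex mat" and b xx :: "nat \<Rightarrow> complex" and E :: "nat \<Rightarrow> nat \<Rightarrow> complex" and c :: real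
  assumes H: "H \<in> carrier_mat N N" and nN: "n < N"
    and Hent: "\<And>p q. p < N \<Longrightarrow> q < N \<Longrightarrow> H $$ (p,q) = (\<Sum>j<n. b j * xx j ^ p * xx j ^ q) + E p q"
    and Eb: "\<And>v. (\<Sum>p<N. (cmod (\<Sum>q<N. E p q * v q))\<^sup>2) \<le> c\<^sup>2 * (\<Sum>q<N. (cmod (v q))\<^sup>2)"
    and c0: "0 \<le> c"
  shows "\<forall>j\<in>{n+1..N}. sing_val H j \<le> c"
proof -
  let ?B = "mat_adjoint H * H"
  obtain u d where ON: "\<forall>i<N. \<forall>l<N. ip N (u i) (u l) = (if i = l then 1 else 0)"
    and EV: "\<forall>i<N. \<forall>p<N. mv ?B N (u i) p = of_real (d i) * u i p"
    and dnn: "\<forall>i<N. 0 \<le> d i"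
    and sv: "singular_values H = rev (sort (map (\<lambda>i. sqrt (d i)) [0..<N]))"
    using sv_facts[OF H] by blast
  define ys where "ys = map (\<lambda>i. sqrt (d i)) [0..<N]"
  have cnt: "length (filter (\<lambda>x. c < x) ys) = card {i. i < N \<and> c < sqrt (d i)}"
    unfolding length_filter_conv_card ys_def by (intro arg_cong[where f=card]) auto
  have le: "card {i. i < N \<and> c < sqrt (d i)} \<le> n"
  proof (rule ccontr)
    assume "\<not> ?thesis"
    hence "n + 1 \<le> card {i. i < N \<and> c < sqrt (d i)}" by simp
    then obtain e where e: "\<forall>r<n+1. e r \<in> {i. i < N \<and> c < sqrt (d i)}" "inj_on e {..<n+1}"
      using pick_family[of "{i. i < N \<and> c < sqrt (d i)}" "n+1"] by auto
    define w where "w = (\<lambda>r. u (e r))"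
    define lam where "lam = (\<lambda>r. d (e r))"
    have eN: "\<forall>r<n+1. e r \<in> {..<N}" using e by auto
    have ONw: "\<And>r r'. r < n+1 \<Longrightarrow> r' < n+1 \<Longrightarrow> ip N (w r) (w r') = (if r = r' then 1 else 0)"
      unfolding w_def by (rule family_ON[OF ON eN e(2)])
    have EVw: "\<And>r p. r < n+1 \<Longrightarrow> p < N \<Longrightarrow> mv ?B N (w r) p = of_real (lam r) * w r p"
      unfolding w_def lam_def using EV e by auto
    have lamc: "c\<^sup>2 < lam r" if "r < n+1" for r
    proof -
      have "c < sqrt (d (e r))" "0 \<le> d (e r)" using e dnn that by auto
      hence "c\<^sup>2 < (sqrt (d (e r)))\<^sup>2" using c0 by (intro power_strict_mono) auto
      thus ?thesis unfolding lam_def using \<open>0 \<le> d (e r)\<close> by simp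
    qed
    define g where "g = (\<lambda>j r. \<Sum>q<N. xx j ^ q * w r q)"
    obtain \<beta> where nz: "\<exists>r<n+1. \<beta> r \<noteq> 0" and k0: "\<forall>j<n. (\<Sum>r<n+1. g j r * \<beta> r) = 0"
      using kernel_exists[of n "n+1" g] by auto
    define x where "x = (\<lambda>q. \<Sum>r<n+1. \<beta> r * w r q)"
    have hx: "(\<Sum>q<N. xx j ^ q * x q) = 0" if "j < n" for j
    proof -
      have "(\<Sum>q<N. xx j ^ q * x q) = (\<Sum>q<N. \<Sum>r<n+1. xx j ^ q * (\<beta> r * w r q))"
        unfolding x_def by (simp only: sum_distrib_left)
      also have "\<dots> = (\<Sum>r<n+1. \<Sum>q<N. xx j ^ q * (\<beta> r * w r q))" by (rule sum.swap)
      also have "\<dots> = (\<Sum>r<n+1. g j r * \<beta> r)"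
        by (intro sum.cong refl) (simp add: g_def sum_distrib_left sum_distrib_right mult_ac)
      finally
      show ?thesis using k0 that by simp
    qed
    have Hx: "mv H N x p = (\<Sum>q<N. E p q * x q)" if p: "p < N" for p
    proof -
      have "mv H N x p = (\<Sum>q<N. (\<Sum>j<n. b j * xx j ^ p * (xx j ^ q * x q)) + E p q * x q)"
        unfolding mv_def using p by (intro sum.cong refl) (simp add: Hent distrib_left distrib_right sum_distrib_left sum_distrib_right mult_ac)
      also have "\<dots> = (\<Sum>j<n. b j * xx j ^ p * (\<Sum>q<N. xx j ^ q * x q)) + (\<Sum>q<N. E p q * x q)"
        by (simp add: sum.distrib sum_distrib_left) (rule sum.swap)
      also have "(\<Sum>j<n. b j * xx j ^ p * (\<Sum>q<N. xx j ^ q * x q)) = 0" using hx by simp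
      finally show ?thesis by simp
    qed
    define S1 where "S1 = (\<Sum>r<n+1. (cmod (\<beta> r))\<^sup>2)"
    define S2 where "S2 = (\<Sum>r<n+1. lam r * (cmod (\<beta> r))\<^sup>2)"
    have f1: "ip N x x = of_real S1"
      unfolding S1_def by (rule family_sums(1)[OF ONw EVw x_def])
    have f2: "ip N (mv ?B N x) x = of_real S2"
      unfolding S2_def by (rule family_sums(2)[OF ONw EVw x_def])
    have "of_real (\<Sum>p<N. (cmod (mv H N x p))\<^sup>2) = ip N (mv H N x) (mv H N x)" by (simp only: ip_self_real)
    also have "\<dots> = of_real S2" using HH_ip[OF H] f2 by simp
    finally have S2eq: "S2 = (\<Sum>p<N. (cmod (mv H N x p))\<^sup>2)" by (simp only: of_real_eq_iff)
    have S1eq: "S1 = (\<Sum>q<N. (cmod (x q))\<^sup>2)" using f1 ip_self_real[of N x] by (simp only: of_real_eq_iff)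
    have "S2 = (\<Sum>p<N. (cmod (\<Sum>q<N. E p q * x q))\<^sup>2)" unfolding S2eq using Hx by simp
    also have "\<dots> \<le> c\<^sup>2 * S1" unfolding S1eq by (rule Eb)
    finally have S21: "S2 \<le> c\<^sup>2 * S1" .
    obtain r0 where r0: "r0 < n+1" "\<beta> r0 \<noteq> 0" using nz by auto
    have "0 < (lam r0 - c\<^sup>2) * (cmod (\<beta> r0))\<^sup>2" using lamc[OF r0(1)] r0(2) by simp
    also have "\<dots> \<le> (\<Sum>r<n+1. (lam r - c\<^sup>2) * (cmod (\<beta> r))\<^sup>2)"
    proof (rule member_le_sum)
      fix r assume "r \<in> {..<n+1} - {r0}"
      hence "c\<^sup>2 < lam r" using lamc by auto
      thus "0 \<le> (lam r - c\<^sup>2) * (cmod (\<beta> r))\<^sup>2" by simp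
    qed (use r0 in auto)
    also have "\<dots> = S2 - c\<^sup>2 * S1" unfolding S1_def S2_def
      by (simp only: left_diff_distrib sum_subtractf sum_distrib_left mult.assoc)
    finally show False using S21 by simp
  qed
  show ?thesis
  proof
    fix j assume j: "j \<in> {n+1..N}"
    have "sing_val H j = rev (sort ys) ! (j - 1)" unfolding sing_val_def sv ys_def ..
    moreover have j1: "j - 1 < length ys" "n \<le> j - 1" using j by (auto simp: ys_def)
    have "\<not> (j - 1 < length (filter (\<lambda>x. c < x) ys))" using cnt le j1(2) by linarith
    hence "\<not> (c < rev (sort ys) ! (j - 1))" using desc_nth_gt[OF j1(1)] by blast
    ultimately show "sing_val H j \<le> c" by simp
  qed
qed

lemma sum_split_add: "(\<Sum>t<K+n. F t) = (\<Sum>t<K. F t) + (\<Sum>j<n. F (K + j))" for n :: nat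
  by (induction n) (auto simp: add.assoc)

lemma amgm: fixes a b t :: real assumes "t > 0" shows "2 * a * b \<le> a\<^sup>2 / t + t * b\<^sup>2"
proof -
  have "0 \<le> (a - t * b)\<^sup>2" by simp
  hence "2 * t * a * b \<le> a\<^sup>2 + t\<^sup>2 * b\<^sup>2" by (simp add: power2_diff power_mult_distrib algebra_simps)
  hence "(2 * a * b) * t \<le> (a\<^sup>2 / t + t * b\<^sup>2) * t" using assms by (simp add: algebra_simps power2_eq_square)
  thus ?thesis using assms by simp
qed

lemma diff_sq_bound: "(cmod (a - b))\<^sup>2 \<le> 2 * (cmod a)\<^sup>2 + 2 * (cmod b)\<^sup>2"
proof -
  have "cmod (a - b) \<le> cmod a + cmod b" by (rule norm_triangle_ineq4)
  hence "(cmod (a - b))\<^sup>2 \<le> (cmod a + cmod b)\<^sup>2" by (intro power_mono) auto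
  also have "\<dots> \<le> 2 * (cmod a)\<^sup>2 + 2 * (cmod b)\<^sup>2" using amgm[of 1 "cmod a" "cmod b"]
    by (simp add: power2_sum)
  finally show ?thesis .
qed

lemma part2:
  fixes H :: "complex mat" and b xx :: "nat \<Rightarrow> complex" and E :: "nat \<Rightarrow> nat \<Rightarrow> complex"
    and c K2 m :: real
  assumes H: "H \<in> carrier_mat N N" and nN: "n \<le> N" and n1: "1 \<le> n"
    and Hent: "\<And>p q. p < N \<Longrightarrow> q < N \<Longrightarrow> H $$ (p,q) = (\<Sum>j<n. b j * xx j ^ p * xx j ^ q) + E p q"
    and Eb: "\<And>v. (\<Sum>p<N. (cmod (\<Sum>q<N. E p q * v q))\<^sup>2) \<le> c\<^sup>2 * (\<Sum>q<N. (cmod (v q))\<^sup>2)"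
    and c0: "0 \<le> c"
    and Vand: "\<And>\<gamma>. (\<Sum>j<n. (cmod (\<gamma> j))\<^sup>2) \<le> K2 * (\<Sum>q<N. (cmod (\<Sum>j<n. \<gamma> j * xx j ^ q))\<^sup>2)"
    and K2: "K2 > 0"
    and bnd: "\<And>j. j < n \<Longrightarrow> m \<le> cmod (b j)" and m0: "0 \<le> m"
    and key: "4 * c\<^sup>2 * K2\<^sup>2 < m\<^sup>2"
  shows "c < sing_val H n"
proof -
  let ?B = "mat_adjoint H * H"
  obtain u d where ON: "\<forall>i<N. \<forall>l<N. ip N (u i) (u l) = (if i = l then 1 else 0)"
    and EV: "\<forall>i<N. \<forall>p<N. mv ?B N (u i) p = of_real (d i) * u i p"
    and dnn: "\<forall>i<N. 0 \<le> d i"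
    and sv: "singular_values H = rev (sort (map (\<lambda>i. sqrt (d i)) [0..<N]))"
    using sv_facts[OF H] by blast
  define ys where "ys = map (\<lambda>i. sqrt (d i)) [0..<N]"
  have cnt: "length (filter (\<lambda>x. c < x) ys) = card {i. i < N \<and> c < sqrt (d i)}"
    unfolding length_filter_conv_card ys_def by (intro arg_cong[where f=card]) auto
  have Vc: "(\<Sum>j<n. (cmod (\<gamma> j))\<^sup>2) \<le> K2 * (\<Sum>q<N. (cmod (\<Sum>j<n. \<gamma> j * cnj (xx j ^ q)))\<^sup>2)" for \<gamma>
  proof -
    have "(\<Sum>j<n. (cmod (\<gamma> j))\<^sup>2) = (\<Sum>j<n. (cmod (cnj (\<gamma> j)))\<^sup>2)" by simp
    also have "\<dots> \<le> K2 * (\<Sum>q<N. (cmod (\<Sum>j<n. cnj (\<gamma> j) * xx j ^ q))\<^sup>2)" by (rule Vand)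
    also have "(\<Sum>q<N. (cmod (\<Sum>j<n. cnj (\<gamma> j) * xx j ^ q))\<^sup>2)
        = (\<Sum>q<N. (cmod (\<Sum>j<n. \<gamma> j * cnj (xx j ^ q)))\<^sup>2)"
    proof (intro sum.cong refl)
      fix q
      have "(\<Sum>j<n. cnj (\<gamma> j) * xx j ^ q) = cnj (\<Sum>j<n. \<gamma> j * cnj (xx j ^ q))"
        by (simp add: cnj_sum)
      thus "(cmod (\<Sum>j<n. cnj (\<gamma> j) * xx j ^ q))\<^sup>2 = (cmod (\<Sum>j<n. \<gamma> j * cnj (xx j ^ q)))\<^sup>2"
        by (simp only: complex_mod_cnj)
    qed
    finally show ?thesis .
  qed
  have ge: "n \<le> card {i. i < N \<and> c < sqrt (d i)}"
  proof (rule ccontr)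
    assume "\<not> ?thesis"
    hence lt: "card {i. i < N \<and> c < sqrt (d i)} < n" by simp
    define J where "J = {i. i < N \<and> \<not> c < sqrt (d i)}"
    define K' where "K' = N - n + 1"
    have "card {i. i < N \<and> c < sqrt (d i)} + card J = N"
    proof -
      have "{i. i < N \<and> c < sqrt (d i)} \<union> J = {..<N}" "{i. i < N \<and> c < sqrt (d i)} \<inter> J = {}"
        unfolding J_def by auto
      thus ?thesis using card_Un_disjoint[of "{i. i < N \<and> c < sqrt (d i)}" J] by (simp add: J_def)
    qed
    hence cJ: "K' \<le> card J" using lt nN unfolding K'_def by linarith
    have KN: "K' + n = N + 1" using nN n1 unfolding K'_def by simp
    obtain e where e: "\<forall>r<K'. e r \<in> J" "inj_on e {..<K'}"
      using pick_family[OF _ cJ] unfolding J_def by auto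
    define w where "w = (\<lambda>r. u (e r))"
    define lam where "lam = (\<lambda>r. d (e r))"
    have eN: "\<forall>r<K'. e r \<in> {..<N}" using e unfolding J_def by auto
    have ONw: "\<And>r r'. r < K' \<Longrightarrow> r' < K' \<Longrightarrow> ip N (w r) (w r') = (if r = r' then 1 else 0)"
      unfolding w_def by (rule family_ON[OF ON eN e(2)])
    have EVw: "\<And>r p. r < K' \<Longrightarrow> p < N \<Longrightarrow> mv ?B N (w r) p = of_real (lam r) * w r p"
      unfolding w_def lam_def using EV eN by auto
    have lamc: "lam r \<le> c\<^sup>2" if "r < K'" for r
    proof -
      have "sqrt (d (e r)) \<le> c" "0 \<le> d (e r)" using e dnn eN that unfolding J_def by auto
      hence "(sqrt (d (e r)))\<^sup>2 \<le> c\<^sup>2" by (intro power_mono) auto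
      thus ?thesis unfolding lam_def using \<open>0 \<le> d (e r)\<close> by simp
    qed
    define G where "G = (\<lambda>q t. if t < K' then w t q else - cnj (xx (t - K') ^ q))"
    obtain z where nz: "\<exists>t<K'+n. z t \<noteq> 0" and k0: "\<forall>q<N. (\<Sum>t<K'+n. G q t * z t) = 0"
      using kernel_exists[of N "K'+n" G] KN by auto
    define \<beta> where "\<beta> = z"
    define \<gamma> where "\<gamma> = (\<lambda>j. z (K' + j))"
    define x where "x = (\<lambda>q. \<Sum>r<K'. \<beta> r * w r q)"
    have x2: "x q = (\<Sum>j<n. \<gamma> j * cnj (xx j ^ q))" if q: "q < N" for q
    proof -
      have "0 = (\<Sum>t<K'+n. G q t * z t)" using k0 q by simp
      also have "\<dots> = (\<Sum>t<K'. G q t * z t) + (\<Sum>j<n. G q (K' + j) * z (K' + j))" by (rule sum_split_add)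
      also have "(\<Sum>t<K'. G q t * z t) = x q" unfolding x_def G_def \<beta>_def by (intro sum.cong refl) (simp add: mult.commute)
      also have "(\<Sum>j<n. G q (K' + j) * z (K' + j)) = - (\<Sum>j<n. \<gamma> j * cnj (xx j ^ q))"
        unfolding G_def \<gamma>_def by (simp add: sum_negf[symmetric] mult.commute)
      finally show ?thesis by (simp add: algebra_simps)
    qed
    define S1 where "S1 = (\<Sum>q<N. (cmod (x q))\<^sup>2)"
    have f1: "ip N x x = of_real (\<Sum>r<K'. (cmod (\<beta> r))\<^sup>2)" by (rule family_sums(1)[OF ONw EVw x_def])
    have f2: "ip N (mv ?B N x) x = of_real (\<Sum>r<K'. lam r * (cmod (\<beta> r))\<^sup>2)" by (rule family_sums(2)[OF ONw EVw x_def])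
    have S1b: "S1 = (\<Sum>r<K'. (cmod (\<beta> r))\<^sup>2)" using f1 ip_self_real[of N x] unfolding S1_def by (simp only: of_real_eq_iff)
    have S1pos: "S1 > 0"
    proof (rule ccontr)
      assume "\<not> S1 > 0"
      moreover have "S1 \<ge> 0" unfolding S1_def by (simp add: sum_nonneg)
      ultimately have S10: "S1 = 0" by simp
      have b0: "\<beta> r = 0" if "r < K'" for r
      proof -
        have "(\<Sum>r<K'. (cmod (\<beta> r))\<^sup>2) = 0" using S10 S1b by simp
        hence "(cmod (\<beta> r))\<^sup>2 = 0" using that by (subst (asm) sum_nonneg_eq_0_iff) auto
        thus ?thesis by simp
      qed
      have xq0: "x q = 0" if "q < N" for q
      proof -
        have "(cmod (x q))\<^sup>2 = 0" using S10 that unfolding S1_def by (subst (asm) sum_nonneg_eq_0_iff) auto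
        thus ?thesis by simp
      qed
      have "(\<Sum>j<n. (cmod (\<gamma> j))\<^sup>2) \<le> K2 * (\<Sum>q<N. (cmod (\<Sum>j<n. \<gamma> j * cnj (xx j ^ q)))\<^sup>2)" by (rule Vc)
      also have "(\<Sum>q<N. (cmod (\<Sum>j<n. \<gamma> j * cnj (xx j ^ q)))\<^sup>2) = 0"
        using x2 xq0 by simp
      finally have "(\<Sum>j<n. (cmod (\<gamma> j))\<^sup>2) \<le> 0" by simp
      hence g0: "\<gamma> j = 0" if "j < n" for j
      proof -
        have "(\<Sum>j<n. (cmod (\<gamma> j))\<^sup>2) = 0" using \<open>_ \<le> 0\<close> by (simp add: antisym sum_nonneg)
        hence "(cmod (\<gamma> j))\<^sup>2 = 0" using that by (subst (asm) sum_nonneg_eq_0_iff) auto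
        thus ?thesis by simp
      qed
      obtain t where t: "t < K'+n" "z t \<noteq> 0" using nz by auto
      show False
      proof (cases "t < K'")
        case True thus False using b0 t unfolding \<beta>_def by auto
      next
        case False
        hence "t - K' < n" "K' + (t - K') = t" using t by auto
        thus False using g0[of "t - K'"] t unfolding \<gamma>_def by auto
      qed
    qed
    have HxS: "(\<Sum>p<N. (cmod (mv H N x p))\<^sup>2) \<le> c\<^sup>2 * S1"
    proof -
      have "of_real (\<Sum>p<N. (cmod (mv H N x p))\<^sup>2) = ip N (mv H N x) (mv H N x)" by (simp only: ip_self_real)
      also have "\<dots> = of_real (\<Sum>r<K'. lam r * (cmod (\<beta> r))\<^sup>2)" using HH_ip[OF H] f2 by simp
      finally have "(\<Sum>p<N. (cmod (mv H N x p))\<^sup>2) = (\<Sum>r<K'. lam r * (cmod (\<beta> r))\<^sup>2)"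
        by (simp only: of_real_eq_iff)
      also have "\<dots> \<le> (\<Sum>r<K'. c\<^sup>2 * (cmod (\<beta> r))\<^sup>2)"
        using lamc by (intro sum_mono mult_right_mono) auto
      also have "\<dots> = c\<^sup>2 * S1" unfolding S1b by (simp add: sum_distrib_left)
      finally show ?thesis .
    qed
    define g where "g = (\<lambda>j. \<Sum>q<N. xx j ^ q * x q)"
    define H0x where "H0x = (\<lambda>p. \<Sum>j<n. (b j * g j) * xx j ^ p)"
    define Ex where "Ex = (\<lambda>p. \<Sum>q<N. E p q * x q)"
    have Hx: "mv H N x p = H0x p + Ex p" if p: "p < N" for p
    proof -
      have "mv H N x p = (\<Sum>q<N. (\<Sum>j<n. b j * xx j ^ p * (xx j ^ q * x q)) + E p q * x q)"
        unfolding mv_def using p by (intro sum.cong refl) (simp add: Hent distrib_left distrib_right sum_distrib_left sum_distrib_right mult_ac)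
      also have "\<dots> = (\<Sum>j<n. b j * xx j ^ p * (\<Sum>q<N. xx j ^ q * x q)) + Ex p"
        unfolding Ex_def by (simp add: sum.distrib sum_distrib_left) (rule sum.swap)
      also have "(\<Sum>j<n. b j * xx j ^ p * (\<Sum>q<N. xx j ^ q * x q)) = H0x p"
        unfolding H0x_def g_def by (simp add: mult_ac)
      finally show ?thesis .
    qed
    have H0b: "(\<Sum>p<N. (cmod (H0x p))\<^sup>2) \<le> 4 * c\<^sup>2 * S1"
    proof -
      have "(\<Sum>p<N. (cmod (H0x p))\<^sup>2) \<le> (\<Sum>p<N. 2 * (cmod (mv H N x p))\<^sup>2 + 2 * (cmod (Ex p))\<^sup>2)"
      proof (rule sum_mono)
        fix p assume "p \<in> {..<N}"
        hence "H0x p = mv H N x p - Ex p" using Hx by simp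
        thus "(cmod (H0x p))\<^sup>2 \<le> 2 * (cmod (mv H N x p))\<^sup>2 + 2 * (cmod (Ex p))\<^sup>2"
          using diff_sq_bound by simp
      qed
      also have "\<dots> = 2 * (\<Sum>p<N. (cmod (mv H N x p))\<^sup>2) + 2 * (\<Sum>p<N. (cmod (Ex p))\<^sup>2)"
        by (simp add: sum.distrib sum_distrib_left)
      also have "(\<Sum>p<N. (cmod (Ex p))\<^sup>2) \<le> c\<^sup>2 * S1" unfolding Ex_def S1_def by (rule Eb)
      finally show ?thesis using HxS by simp
    qed
    have gb: "m\<^sup>2 * (\<Sum>j<n. (cmod (g j))\<^sup>2) \<le> 4 * c\<^sup>2 * K2 * S1"
    proof -
      have "m\<^sup>2 * (\<Sum>j<n. (cmod (g j))\<^sup>2) = (\<Sum>j<n. (m * cmod (g j))\<^sup>2)"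
        by (simp add: sum_distrib_left power_mult_distrib)
      also have "\<dots> \<le> (\<Sum>j<n. (cmod (b j * g j))\<^sup>2)"
        using bnd m0 by (intro sum_mono power_mono) (auto simp: norm_mult intro: mult_right_mono)
      also have "\<dots> \<le> K2 * (\<Sum>p<N. (cmod (H0x p))\<^sup>2)" unfolding H0x_def by (rule Vand)
      also have "\<dots> \<le> K2 * (4 * c\<^sup>2 * S1)" using K2 H0b by (intro mult_left_mono) auto
      finally show ?thesis by (simp add: mult_ac)
    qed
    have ipx: "ip N x x = (\<Sum>j<n. \<gamma> j * cnj (g j))"
    proof -
      have "ip N x x = (\<Sum>q<N. (\<Sum>j<n. \<gamma> j * cnj (xx j ^ q)) * cnj (x q))"
        unfolding ip_def using x2 by (intro sum.cong refl) auto
      also have "\<dots> = (\<Sum>q<N. \<Sum>j<n. \<gamma> j * cnj (xx j ^ q * x q))"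
        by (intro sum.cong refl) (simp add: sum_distrib_left sum_distrib_right mult_ac)
      also have "\<dots> = (\<Sum>j<n. \<Sum>q<N. \<gamma> j * cnj (xx j ^ q * x q))"
        by (rule sum.swap)
      also have "\<dots> = (\<Sum>j<n. \<gamma> j * cnj (g j))"
        unfolding g_def by (simp add: cnj_sum sum_distrib_left)
      finally show ?thesis .
    qed
    have ipS: "ip N x x = of_real S1" unfolding S1_def by (rule ip_self_real)
    have "S1 = cmod (ip N x x)" unfolding ipS norm_of_real using S1pos by simp
    also have "\<dots> \<le> (\<Sum>j<n. cmod (\<gamma> j) * cmod (g j))"
      unfolding ipx by (rule order_trans[OF norm_sum]) (simp add: norm_mult)
    finally have S1g0: "S1 \<le> (\<Sum>j<n. cmod (\<gamma> j) * cmod (g j))" .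
    have "(\<Sum>j<n. 2 * cmod (\<gamma> j) * cmod (g j)) = 2 * (\<Sum>j<n. cmod (\<gamma> j) * cmod (g j))"
      by (simp only: sum_distrib_left mult.assoc)
    hence S1g: "2 * S1 \<le> (\<Sum>j<n. 2 * cmod (\<gamma> j) * cmod (g j))" using S1g0 by linarith
    also have "\<dots> \<le> (\<Sum>j<n. (cmod (\<gamma> j))\<^sup>2 / K2 + K2 * (cmod (g j))\<^sup>2)"
      by (intro sum_mono amgm K2)
    also have "\<dots> = (\<Sum>j<n. (cmod (\<gamma> j))\<^sup>2) / K2 + K2 * (\<Sum>j<n. (cmod (g j))\<^sup>2)"
      by (simp add: sum.distrib sum_distrib_left sum_divide_distrib)
    also have "(\<Sum>j<n. (cmod (\<gamma> j))\<^sup>2) \<le> K2 * S1"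
    proof -
      have "(\<Sum>j<n. (cmod (\<gamma> j))\<^sup>2) \<le> K2 * (\<Sum>q<N. (cmod (\<Sum>j<n. \<gamma> j * cnj (xx j ^ q)))\<^sup>2)" by (rule Vc)
      also have "(\<Sum>q<N. (cmod (\<Sum>j<n. \<gamma> j * cnj (xx j ^ q)))\<^sup>2) = S1"
        unfolding S1_def using x2 by simp
      finally show ?thesis .
    qed
    hence "(\<Sum>j<n. (cmod (\<gamma> j))\<^sup>2) / K2 \<le> S1" using K2 by (simp add: field_simps)
    finally have "S1 \<le> K2 * (\<Sum>j<n. (cmod (g j))\<^sup>2)" by simp
    hence "m\<^sup>2 * S1 \<le> m\<^sup>2 * (K2 * (\<Sum>j<n. (cmod (g j))\<^sup>2))"
      by (intro mult_left_mono) auto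
    hence "m\<^sup>2 * S1 \<le> K2 * (m\<^sup>2 * (\<Sum>j<n. (cmod (g j))\<^sup>2))"
      by (simp only: mult_ac)
    also have "\<dots> \<le> K2 * (4 * c\<^sup>2 * K2 * S1)" using gb K2 by (intro mult_left_mono) auto
    finally have "m\<^sup>2 * S1 \<le> (4 * c\<^sup>2 * K2\<^sup>2) * S1" by (simp add: power2_eq_square mult_ac)
    hence "m\<^sup>2 \<le> 4 * c\<^sup>2 * K2\<^sup>2" using S1pos by simp
    thus False using key by simp
  qed
  have n1': "n - 1 < length ys" using nN n1 by (simp add: ys_def)
  have "n - 1 < length (filter (\<lambda>x. c < x) ys)" using cnt ge n1 by linarith
  hence "c < rev (sort ys) ! (n - 1)" using desc_nth_gt[OF n1'] by blast
  thus ?thesis unfolding sing_val_def sv ys_def .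
qed

lemma sq_sum_le: fixes a :: "nat \<Rightarrow> real" shows "(\<Sum>i<N. a i)\<^sup>2 \<le> real N * (\<Sum>i<N. (a i)\<^sup>2)"
proof -
  have "(\<Sum>i<N. a i)\<^sup>2 = (\<Sum>i<N. \<Sum>j<N. a i * a j)"
    by (simp add: power2_eq_square sum_product)
  also have "\<dots> \<le> (\<Sum>i<N. \<Sum>j<N. ((a i)\<^sup>2 + (a j)\<^sup>2) / 2)"
  proof (intro sum_mono)
    fix i j
    have "2 * a i * a j \<le> (a i)\<^sup>2 / 1 + 1 * (a j)\<^sup>2" by (rule amgm) simp
    thus "a i * a j \<le> ((a i)\<^sup>2 + (a j)\<^sup>2) / 2" by simp
  qed
  also have "\<dots> = (\<Sum>i<N. \<Sum>j<N. (a i)\<^sup>2 / 2) + (\<Sum>i<N. \<Sum>j<N. (a j)\<^sup>2 / 2)"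
    by (simp add: add_divide_distrib sum.distrib)
  also have "(\<Sum>i<N. \<Sum>j<N. (a j)\<^sup>2 / 2) = (\<Sum>i<N. \<Sum>j<N. (a i)\<^sup>2 / 2)" by (rule sum.swap)
  also have "(\<Sum>i<N. \<Sum>j<N. (a i)\<^sup>2 / 2) = real N * (\<Sum>i<N. (a i)\<^sup>2) / 2"
    by (simp add: sum_distrib_left sum_divide_distrib mult.commute)
  finally show ?thesis by simp
qed

lemma E_bound:
  fixes W :: "nat \<Rightarrow> complex" and \<sigma> :: real and s :: nat
  assumes s0: "0 \<le> \<sigma>" and nb: "\<And>t. t \<in> {1..2*s+1} \<Longrightarrow> cmod (W t) \<le> \<sigma>"
  shows "(\<Sum>p<s+1. (cmod (\<Sum>q<s+1. W (p + q + 1) * v q))\<^sup>2) \<le> ((real s + 1) * \<sigma>)\<^sup>2 * (\<Sum>q<s+1. (cmod (v q))\<^sup>2)"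
proof -
  let ?N = "s + 1"
  have each: "(cmod (\<Sum>q<?N. W (p + q + 1) * v q))\<^sup>2 \<le> \<sigma>\<^sup>2 * (real ?N * (\<Sum>q<?N. (cmod (v q))\<^sup>2))"
    if p: "p < ?N" for p
  proof -
    have "cmod (\<Sum>q<?N. W (p + q + 1) * v q) \<le> (\<Sum>q<?N. cmod (W (p + q + 1)) * cmod (v q))"
      by (rule order_trans[OF norm_sum]) (simp add: norm_mult)
    also have "\<dots> \<le> (\<Sum>q<?N. \<sigma> * cmod (v q))"
      using p by (intro sum_mono mult_right_mono nb) auto
    also have "\<dots> = \<sigma> * (\<Sum>q<?N. cmod (v q))" by (simp only: sum_distrib_left)
    finally have "(cmod (\<Sum>q<?N. W (p + q + 1) * v q))\<^sup>2 \<le> (\<sigma> * (\<Sum>q<?N. cmod (v q)))\<^sup>2"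
      by (intro power_mono) auto
    also have "\<dots> = \<sigma>\<^sup>2 * (\<Sum>q<?N. cmod (v q))\<^sup>2" by (simp add: power_mult_distrib)
    also have "\<dots> \<le> \<sigma>\<^sup>2 * (real ?N * (\<Sum>q<?N. (cmod (v q))\<^sup>2))"
      by (intro mult_left_mono sq_sum_le) auto
    finally show ?thesis .
  qed
  have "(\<Sum>p<?N. (cmod (\<Sum>q<?N. W (p + q + 1) * v q))\<^sup>2) \<le> (\<Sum>p<?N. \<sigma>\<^sup>2 * (real ?N * (\<Sum>q<?N. (cmod (v q))\<^sup>2)))"
    using each by (intro sum_mono) auto
  also have "\<dots> = ((real s + 1) * \<sigma>)\<^sup>2 * (\<Sum>q<?N. (cmod (v q))\<^sup>2)"
    by (simp add: power2_eq_square algebra_simps)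
  finally show ?thesis .
qed

lemma exp_split:
  fixes yv \<Omega> :: real and s p q :: nat
  assumes "s > 0"
  shows "exp (\<i> * of_real (yv * (- \<Omega> + (real (p + q + 1) - 1) / real s * \<Omega>)))
       = cis (- (yv * \<Omega>)) * cis (yv * \<Omega> / real s) ^ p * cis (yv * \<Omega> / real s) ^ q"
proof -
  have "yv * (- \<Omega> + (real (p + q + 1) - 1) / real s * \<Omega>) = - (yv * \<Omega>) + real p * (yv * \<Omega> / real s) + real q * (yv * \<Omega> / real s)"
    using assms by (simp add: field_simps)
  hence "exp (\<i> * of_real (yv * (- \<Omega> + (real (p + q + 1) - 1) / real s * \<Omega>)))
        = cis (- (yv * \<Omega>) + real p * (yv * \<Omega> / real s) + real q * (yv * \<Omega> / real s))"
    by (simp add: cis_conv_exp)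
  also have "\<dots> = cis (- (yv * \<Omega>)) * cis (yv * \<Omega> / real s) ^ p * cis (yv * \<Omega> / real s) ^ q"
    by (simp add: DeMoivre cis_mult)
  finally show ?thesis .
qed

theorem theorem5p1:
  fixes n s :: nat and \<Omega> \<sigma> :: real
    and a :: "nat \<Rightarrow> complex" and y :: "nat \<Rightarrow> real" and W :: "nat \<Rightarrow> complex"
    and z :: "nat \<Rightarrow> real" and Y :: "nat \<Rightarrow> complex" and H :: "complex mat"
  defines "m_min \<equiv> Min ((\<lambda>j. cmod (a j)) ` {1..n})"
  defines "z \<equiv> (\<lambda>t. - \<Omega> + (real t - 1) / real s * \<Omega>)"
  defines "Y \<equiv> (\<lambda>t. (\<Sum>j=1..n. a j * exp (\<i> * of_real (y j * z t))) + W t)"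
  defines "H \<equiv> mat (s + 1) (s + 1) (\<lambda>(p, q). Y (p + q + 1))"
  assumes n2: "n \<ge> 2" and sn: "s \<ge> n" and \<Omega>pos: "\<Omega> > 0"
    and \<sigma>pos: "0 < \<sigma>" and \<sigma>m: "\<sigma> < m_min"
    and ydist: "inj_on y {1..n}"
    and yrange: "\<And>j. j \<in> {1..n} \<Longrightarrow> \<bar>y j\<bar> \<le> (real n - 1) * pi / (2 * \<Omega>)"
    and noise: "\<And>t. t \<in> {1..2*s+1} \<Longrightarrow> cmod (W t) \<le> \<sigma>"
  shows "(\<forall>j \<in> {n+1..s+1}. sing_val H j \<le> (real s + 1) * \<sigma>)
     \<and> (Min {\<bar>y p - y j\<bar> | p j. p \<in> {1..n} \<and> j \<in> {1..n} \<and> p \<noteq> j}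
          > pi * real s / \<Omega> *
            ((2 * real n * (real s + 1) / (zeta_fn n)^2) * (\<sigma> / m_min)) powr (1 / (2 * real n - 2))
        \<longrightarrow> sing_val H n > (real s + 1) * \<sigma>)"
proof -
  have s0: "s > 0" using n2 sn by simp
  define N where "N = s + 1"
  define th where "th = (\<lambda>j. y (Suc j) * \<Omega> / real s)"
  define xx where "xx = (\<lambda>j. cis (th j))"
  define b where "b = (\<lambda>j. a (Suc j) * cis (- (y (Suc j) * \<Omega>)))"
  define E where "E = (\<lambda>p q. W (p + q + 1))"
  define c where "c = (real s + 1) * \<sigma>"
  have Hc: "H \<in> carrier_mat N N" unfolding H_def N_def by simp
  have Hent: "H $$ (p,q) = (\<Sum>j<n. b j * xx j ^ p * xx j ^ q) + E p q" if pq: "p < N" "q < N" for p q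
  proof -
    have "H $$ (p,q) = Y (p+q+1)" unfolding H_def N_def using pq N_def by simp
    also have "\<dots> = (\<Sum>j=1..n. a j * exp (\<i> * of_real (y j * z (p+q+1)))) + W (p+q+1)" unfolding Y_def ..
    also have "(\<Sum>j=1..n. a j * exp (\<i> * of_real (y j * z (p+q+1))))
        = (\<Sum>j<n. a (Suc j) * exp (\<i> * of_real (y (Suc j) * z (p+q+1))))"
      using sum.atLeast1_atMost_eq[of "\<lambda>j. a j * exp (\<i> * of_real (y j * z (p+q+1)))" n] by simp
    also have "\<dots> = (\<Sum>j<n. b j * xx j ^ p * xx j ^ q)"
    proof (intro sum.cong refl)
      fix j
      show "a (Suc j) * exp (\<i> * of_real (y (Suc j) * z (p+q+1))) = b j * xx j ^ p * xx j ^ q"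
        unfolding z_def exp_split[OF s0] b_def xx_def th_def by (simp only: mult_ac)
    qed
    finally show ?thesis unfolding E_def by simp
  qed
  have Eb: "(\<Sum>p<N. (cmod (\<Sum>q<N. E p q * v q))\<^sup>2) \<le> c\<^sup>2 * (\<Sum>q<N. (cmod (v q))\<^sup>2)" for v
    unfolding E_def c_def N_def using E_bound[of \<sigma> s W v] \<sigma>pos noise by simp
  have c0: "0 \<le> c" unfolding c_def using \<sigma>pos by simp
  have nN: "n < N" unfolding N_def using sn by simp
  have P1: "\<forall>j\<in>{n+1..N}. sing_val H j \<le> c" by (rule part1[OF Hc nN Hent Eb c0])
  have part1res: "\<forall>j \<in> {n+1..s+1}. sing_val H j \<le> (real s + 1) * \<sigma>"
    using P1 unfolding N_def c_def .
  moreover have "sing_val H n > (real s + 1) * \<sigma>"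
    if cond: "Min {\<bar>y p - y j\<bar> | p j. p \<in> {1..n} \<and> j \<in> {1..n} \<and> p \<noteq> j}
          > pi * real s / \<Omega> *
            ((2 * real n * (real s + 1) / (zeta_fn n)^2) * (\<sigma> / m_min)) powr (1 / (2 * real n - 2))"
  proof -
    define SS where "SS = {\<bar>y p - y j\<bar> | p j. p \<in> {1..n} \<and> j \<in> {1..n} \<and> p \<noteq> j}"
    define sep where "sep = Min SS"
    define X where "X = (2 * real n * (real s + 1) / (zeta_fn n)^2) * (\<sigma> / m_min)"
    define P where "P = X powr (1 / (2 * real n - 2))"
    have condP: "sep > pi * real s / \<Omega> * P" using cond unfolding sep_def SS_def P_def X_def .
    have m0: "m_min > 0" using \<sigma>pos \<sigma>m by simp
    have z0: "zeta_fn n > 0" by (rule zeta_pos)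
    have X0: "X > 0" unfolding X_def using m0 \<sigma>pos z0 n2 by simp
    have P0: "P \<ge> 0" unfolding P_def by simp
    have finSS: "finite SS"
    proof -
      have "SS \<subseteq> {\<bar>y p - y j\<bar> | p j. p \<in> {1..n} \<and> j \<in> {1..n}}" unfolding SS_def by blast
      moreover have "finite {\<bar>y p - y j\<bar> | p j. p \<in> {1..n} \<and> j \<in> {1..n}}"
        by (rule finite_image_set2) auto
      ultimately show ?thesis by (rule finite_subset)
    qed
    have sep_le: "sep \<le> \<bar>y p - y j\<bar>" if "p \<in> {1..n}" "j \<in> {1..n}" "p \<noteq> j" for p j
      unfolding sep_def by (rule Min_le[OF finSS]) (use that in \<open>auto simp: SS_def\<close>)
    define \<delta> where "\<delta> = \<Omega> * sep / real s"
    have "pi * real s / \<Omega> * P \<ge> 0" using P0 \<Omega>pos by simp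
    hence sep0: "sep > 0" using condP by linarith
    have d0: "\<delta> > 0" unfolding \<delta>_def using sep0 \<Omega>pos s0 by simp
    have thdiff: "\<bar>th i - th k\<bar> = \<Omega> / real s * \<bar>y (Suc i) - y (Suc k)\<bar>" for i k
    proof -
      have "th i - th k = \<Omega> / real s * (y (Suc i) - y (Suc k))" unfolding th_def using s0 by (simp add: field_simps)
      thus ?thesis using \<Omega>pos s0 by (simp add: abs_mult)
    qed
    have gap: "\<delta> \<le> \<bar>th i - th k\<bar>" if "i < n" "k < n" "i \<noteq> k" for i k
    proof -
      have "sep \<le> \<bar>y (Suc i) - y (Suc k)\<bar>" using that by (intro sep_le) auto
      hence "\<Omega> / real s * sep \<le> \<Omega> / real s * \<bar>y (Suc i) - y (Suc k)\<bar>"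
        using \<Omega>pos s0 by (intro mult_left_mono) auto
      thus ?thesis unfolding thdiff \<delta>_def by simp
    qed
    have spn: "\<bar>th i - th k\<bar> \<le> pi" if "i < n" "k < n" for i k
    proof -
      have yi: "\<bar>y (Suc i)\<bar> \<le> (real n - 1) * pi / (2 * \<Omega>)" "\<bar>y (Suc k)\<bar> \<le> (real n - 1) * pi / (2 * \<Omega>)"
        using yrange that by auto
      have e: "(real n - 1) * pi / \<Omega> = (real n - 1) * pi / (2 * \<Omega>) + (real n - 1) * pi / (2 * \<Omega>)"
        by (simp add: field_simps)
      have "\<bar>y (Suc i) - y (Suc k)\<bar> \<le> (real n - 1) * pi / \<Omega>"
        unfolding e using yi abs_triangle_ineq4[of "y (Suc i)" "y (Suc k)"] by linarith
      hence "\<Omega> / real s * \<bar>y (Suc i) - y (Suc k)\<bar> \<le> \<Omega> / real s * ((real n - 1) * pi / \<Omega>)"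
        using \<Omega>pos s0 by (intro mult_left_mono) auto
      also have "\<dots> = (real n - 1) / real s * pi" using \<Omega>pos s0 by (simp add: field_simps)
      also have "\<dots> \<le> 1 * pi" using sn s0 by (intro mult_right_mono) (auto simp: field_simps)
      finally show ?thesis unfolding thdiff by simp
    qed
    define K2 where "K2 = real n * ((pi/\<delta>)^(n-1) / zeta_fn n)\<^sup>2"
    have nleN: "n \<le> N" using nN by simp
    have Vand: "(\<Sum>j<n. (cmod (\<gamma> j))\<^sup>2) \<le> K2 * (\<Sum>q<N. (cmod (\<Sum>j<n. \<gamma> j * xx j ^ q))\<^sup>2)" for \<gamma>
      unfolding K2_def xx_def by (rule vand_main[OF nleN d0 gap spn])
    have K2pos: "K2 > 0" unfolding K2_def using n2 d0 z0 by simp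
    have bnd: "m_min \<le> cmod (b j)" if "j < n" for j
    proof -
      have "cmod (b j) = cmod (a (Suc j))" unfolding b_def by (simp add: norm_mult)
      moreover have "m_min \<le> cmod (a (Suc j))" unfolding m_min_def
        by (rule Min_le) (use that in auto)
      ultimately show ?thesis by simp
    qed
    have key: "4 * c\<^sup>2 * K2\<^sup>2 < m_min\<^sup>2"
    proof -
      define Q where "Q = \<delta> / pi"
      define k where "k = 2 * n - 2"
      have rk: "real k = 2 * real n - 2" unfolding k_def using n2 by simp
      have k0: "k > 0" unfolding k_def using n2 by simp
      have QP: "Q > P"
      proof -
        have "pi * real s / \<Omega> * P < sep" by (rule condP)
        hence "(pi * real s / \<Omega> * P) * (\<Omega> / (real s * pi)) < sep * (\<Omega> / (real s * pi))"
          using \<Omega>pos s0 by (intro mult_strict_right_mono) auto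
        moreover have "(pi * real s / \<Omega> * P) * (\<Omega> / (real s * pi)) = P" using \<Omega>pos s0 by (simp add: field_simps)
        moreover have "sep * (\<Omega> / (real s * pi)) = Q" unfolding Q_def \<delta>_def by (simp add: field_simps)
        ultimately show ?thesis by simp
      qed
      have PkX: "P ^ k = X"
      proof -
        have "P ^ k = P powr real k" using P0 X0 unfolding P_def by (simp add: powr_realpow)
        also have "\<dots> = X powr (1 / (2 * real n - 2) * real k)" unfolding P_def by (simp add: powr_powr)
        also have "1 / (2 * real n - 2) * real k = 1" using rk n2 by simp
        finally show ?thesis using X0 by simp
      qed
      have QkX: "Q ^ k > X" using power_strict_mono[OF QP P0, of k] k0 PkX by simp
      have Q0: "Q > 0" unfolding Q_def using d0 by simp
      have "K2 = real n / ((zeta_fn n)\<^sup>2 * Q ^ k)"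
      proof -
        have "(pi/\<delta>) = 1 / Q" unfolding Q_def by simp
        have kk: "k = 2 * (n - 1)" unfolding k_def by simp
        hence "((pi/\<delta>)^(n-1))\<^sup>2 = 1 / Q ^ k" unfolding kk using \<open>pi/\<delta> = 1/Q\<close>
          by (simp add: power_one_over power_mult[symmetric] mult.commute flip: power_mult)
        note e = this
        have "K2 = real n * (((pi/\<delta>)^(n-1))\<^sup>2 / (zeta_fn n)\<^sup>2)" unfolding K2_def by (simp only: power_divide)
        also have "\<dots> = real n * ((1 / Q ^ k) / (zeta_fn n)\<^sup>2)" by (simp only: e)
        also have "\<dots> = real n / ((zeta_fn n)\<^sup>2 * Q ^ k)" using Q0 z0 by (simp add: field_simps)
        finally show ?thesis .
      qed
      also have "\<dots> < real n / ((zeta_fn n)\<^sup>2 * X)"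
        using QkX X0 z0 n2 by (intro divide_strict_left_mono mult_strict_left_mono) auto
      also have "real n / ((zeta_fn n)\<^sup>2 * X) = m_min / (2 * c)"
      proof -
        have zx: "(zeta_fn n)\<^sup>2 * X = 2 * real n * c / m_min"
          unfolding X_def c_def using z0 m0 by (simp add: field_simps)
        have cp: "c > 0" unfolding c_def using \<sigma>pos by simp
        have np: "real n > 0" using n2 by simp
        show ?thesis unfolding zx using cp np m0 by (simp add: field_simps)
      qed
      finally have "K2 < m_min / (2 * c)" .
      moreover have cp: "2 * c > 0" unfolding c_def using \<sigma>pos by simp
      ultimately have "K2 * (2 * c) < m_min" by (simp add: pos_less_divide_eq)
      hence "2 * c * K2 < m_min" by (simp add: mult_ac)
      moreover have "0 \<le> 2 * c * K2" using c0 K2pos by simp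
      ultimately have "(2 * c * K2)\<^sup>2 < m_min\<^sup>2" by (intro power_strict_mono) auto
      thus ?thesis by (simp add: power_mult_distrib)
    qed
    have n1: "1 \<le> n" using n2 by simp
    have "c < sing_val H n"
      by (rule part2[OF Hc nleN n1 Hent Eb c0 Vand K2pos bnd less_imp_le[OF m0] key])
    thus ?thesis unfolding c_def .
  qed
  ultimately show ?thesis by blast
qed


end
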